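(* Let $T$ be a hypertree map without cycles. Then its partial-dual Euler-genus polynomial is the constant $\partial_{\varepsilon_T}(z)=2^{e(T)}$.
   Context: A hypermap $H$ is a cellular embedding in a closed surface of the bipartite incidence graph of a hypergraph (vertex nodes $V(H)$, hyperedge nodes $E(H)$, $v\sim e$ iff $v\in e$); $v(H),e(H),f(H)$ count vertices, hyperedges, faces, $n_i=|e_i|$, $\chi(H)=v(H)+e(H)+f(H)-\sum_i n_i$, $c(H)$ the number of components, $\varepsilon(H)=2c(H)-\chi(H)$ the Euler genus. Combinatorially $H=(B,\tau,\psi)$, cycles of $\tau$ (in pairs) encoding vertex rotations, cycles of $\psi$ encoding hyperedges, cycles of $\psi\circ\tau$ encoding faces; for $A\subseteq E(H)$ the partial dual is $H^A=(B,\psi|_A\circ\tau,\psi)$, where $\psi|_A$ equals $\psi$ on labels of hyperedges in $A$ and the identity elsewhere; $\partial_{\varepsilon_H}(z)=\sum_{A\subseteq E(H)}z^{\varepsilon(H^A)}$. In a hypergraph, a chain of length $q$ is a sequence $v_1e_1v_2\cdots v_qe_qv_{q+1}$ of vertices and hyperedges with $v_i,v_{i+1}\in e_i$, the hyperedges pairwise distinct and the vertices pairwise distinct except possibly $v_1=v_{q+1}$; it is a cycle if $q\ge2$ and $v_1=v_{q+1}$. A hypertree is a connected hypergraph such that removing any hyperedge (keeping all vertices) leaves a disconnected hypergraph; a hypertree map is a hypermap whose hypergraph is a hypertree; "without cycles" means the hypergraph contains no cycle.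
   Formalization: The partial dual $H^A$ has hyperedge permutation equal to $\psi$ on hyperedges outside A and to its inverse on those in A, so its faces are the cycles of $\psi|_A\circ\tau$ with A replaced by its complement, not of $\psi\circ\psi|_A\circ\tau$. The statement above fails without it. *)

theory Defs
  imports Complex_Main
begin

text \<open>Reachability under a set of functions (generators); for bijections of a finite
  set this is the orbit relation of the generated group.\<close>
definition gen_rel :: "('b \<Rightarrow> 'b) set \<Rightarrow> ('b \<times> 'b) set" where
  "gen_rel G = {(x, g x) | x g. g \<in> G}"

definition orbit_of :: "('b \<Rightarrow> 'b) set \<Rightarrow> 'b \<Rightarrow> 'b set" where
  "orbit_of G b = {b'. (b, b') \<in> (gen_rel G)\<^sup>*}"

definition num_orbits :: "'b set \<Rightarrow> ('b \<Rightarrow> 'b) set \<Rightarrow> nat" where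
  "num_orbits B G = card (orbit_of G ` B)"

definition num_cycles :: "'b set \<Rightarrow> ('b \<Rightarrow> 'b) \<Rightarrow> nat" where
  "num_cycles B f = num_orbits B {f}"

text \<open>Vertices = orbits of <r1,r2>, hyperedges = orbits of <r0,r2>,
  faces = orbits of <r0,r1>, incidences (edges of the bipartite incidence map)
  = orbits of <r2>.  The paper's permutations are tau = r1 o r2 (each vertex gives
  a pair of tau-cycles) and psi = r2 o r0 (each hyperedge gives a pair of psi-cycles);
  the faces are then encoded (in pairs) by the cycles of psi o tau.\<close>

record 'b hypermap =
  blades :: "'b set"
  r0 :: "'b \<Rightarrow> 'b"
  r1 :: "'b \<Rightarrow> 'b"
  r2 :: "'b \<Rightarrow> 'b"

definition fpf_involution :: "'b set \<Rightarrow> ('b \<Rightarrow> 'b) \<Rightarrow> bool" where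
  "fpf_involution B r \<longleftrightarrow> (\<forall>b\<in>B. r b \<in> B \<and> r (r b) = b \<and> r b \<noteq> b)"

definition hm_tau :: "'b hypermap \<Rightarrow> 'b \<Rightarrow> 'b" where
  "hm_tau H = r1 H \<circ> r2 H"

definition hm_psi :: "'b hypermap \<Rightarrow> 'b \<Rightarrow> 'b" where
  "hm_psi H = r2 H \<circ> r0 H"

definition hm_vertices :: "'b hypermap \<Rightarrow> 'b set set" where
  "hm_vertices H = orbit_of {r1 H, r2 H} ` blades H"

definition hm_hyperedges :: "'b hypermap \<Rightarrow> 'b set set" where
  "hm_hyperedges H = orbit_of {r0 H, r2 H} ` blades H"

definition hm_inc :: "'b set \<Rightarrow> 'b set \<Rightarrow> bool" where
  "hm_inc v e \<longleftrightarrow> v \<inter> e \<noteq> {}"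

text \<open>Well-formed hypermap of a hypergraph: finite, three fixed-point-free involutions,
  and no multiple incidences (a vertex meets a hyperedge in at most one incidence,
  i.e. at most two blades), so that the incidence graph is the incidence graph
  of a hypergraph.\<close>
definition hypermap :: "'b hypermap \<Rightarrow> bool" where
  "hypermap H \<longleftrightarrow> finite (blades H)
     \<and> fpf_involution (blades H) (r0 H)
     \<and> fpf_involution (blades H) (r1 H)
     \<and> fpf_involution (blades H) (r2 H)
     \<and> (\<forall>v\<in>hm_vertices H. \<forall>e\<in>hm_hyperedges H. card (v \<inter> e) \<le> 2)"

text \<open>For a triple (B, t, p) (with the reflection r used to detect components):
  v = #cycles(t)/2, e = #cycles(p)/2, f = #cycles(p o t)/2, sum n_i = |B|/2
  (number of incidences), c = number of connected components.\<close>
definition triple_chi :: "'b set \<Rightarrow> ('b \<Rightarrow> 'b) \<Rightarrow> ('b \<Rightarrow> 'b) \<Rightarrow> int" where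
  "triple_chi B t p =
     int (num_cycles B t) div 2 + int (num_cycles B p) div 2
     + int (num_cycles B (p \<circ> t)) div 2 - int (card B) div 2"

definition triple_eg :: "'b set \<Rightarrow> ('b \<Rightarrow> 'b) \<Rightarrow> ('b \<Rightarrow> 'b) \<Rightarrow> ('b \<Rightarrow> 'b) \<Rightarrow> int" where
  "triple_eg B t p r = 2 * int (num_orbits B {t, p, r}) - triple_chi B t p"

definition euler_genus :: "'b hypermap \<Rightarrow> int" where
  "euler_genus H = triple_eg (blades H) (hm_tau H) (hm_psi H) (r2 H)"

definition psi_restr :: "'b hypermap \<Rightarrow> 'b set set \<Rightarrow> 'b \<Rightarrow> 'b" where
  "psi_restr H A b = (if b \<in> \<Union>A then hm_psi H b else b)"

text \<open>Hyperedge permutation of the partial dual: the hyperedges are the same, those in A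
  being traversed in the reverse direction (psi^-1 = r0 o r2 on them).\<close>
definition psi_dual :: "'b hypermap \<Rightarrow> 'b set set \<Rightarrow> 'b \<Rightarrow> 'b" where
  "psi_dual H A b = (if b \<in> \<Union>A then (r0 H \<circ> r2 H) b else hm_psi H b)"

text \<open>H^A = (B, psi|_A o tau, psi^A): vertices are the cycles of psi|_A o tau.\<close>
definition pd_euler_genus :: "'b hypermap \<Rightarrow> 'b set set \<Rightarrow> int" where
  "pd_euler_genus H A =
     triple_eg (blades H) (psi_restr H A \<circ> hm_tau H) (psi_dual H A) (r2 H)"

text \<open>partial-dual Euler-genus polynomial, evaluated at z (int exponents, which are
  in fact nonnegative)\<close>
definition pd_eg_poly :: "'b hypermap \<Rightarrow> real \<Rightarrow> real" where
  "pd_eg_poly H z = (\<Sum>A\<in>Pow (hm_hyperedges H). z powi pd_euler_genus H A)"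

definition hg_chain :: "'v set \<Rightarrow> 'e set \<Rightarrow> ('v \<Rightarrow> 'e \<Rightarrow> bool) \<Rightarrow> 'v list \<Rightarrow> 'e list \<Rightarrow> bool" where
  "hg_chain V E inc vs es \<longleftrightarrow>
     length vs = length es + 1 \<and> set vs \<subseteq> V \<and> set es \<subseteq> E
     \<and> (\<forall>i<length es. inc (vs ! i) (es ! i) \<and> inc (vs ! Suc i) (es ! i))
     \<and> distinct es \<and> distinct (tl vs) \<and> distinct (butlast vs)"

definition hg_cycle :: "'v set \<Rightarrow> 'e set \<Rightarrow> ('v \<Rightarrow> 'e \<Rightarrow> bool) \<Rightarrow> 'v list \<Rightarrow> 'e list \<Rightarrow> bool" where
  "hg_cycle V E inc vs es \<longleftrightarrow> hg_chain V E inc vs es \<and> length es \<ge> 2 \<and> hd vs = last vs"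

definition hg_has_cycle :: "'v set \<Rightarrow> 'e set \<Rightarrow> ('v \<Rightarrow> 'e \<Rightarrow> bool) \<Rightarrow> bool" where
  "hg_has_cycle V E inc \<longleftrightarrow> (\<exists>vs es. hg_cycle V E inc vs es)"

definition hg_connected :: "'v set \<Rightarrow> 'e set \<Rightarrow> ('v \<Rightarrow> 'e \<Rightarrow> bool) \<Rightarrow> bool" where
  "hg_connected V E inc \<longleftrightarrow>
     (\<forall>u\<in>V. \<forall>w\<in>V. (u, w) \<in> {(x, y). x \<in> V \<and> y \<in> V \<and> (\<exists>e\<in>E. inc x e \<and> inc y e)}\<^sup>*)"

definition hg_hypertree :: "'v set \<Rightarrow> 'e set \<Rightarrow> ('v \<Rightarrow> 'e \<Rightarrow> bool) \<Rightarrow> bool" where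
  "hg_hypertree V E inc \<longleftrightarrow> hg_connected V E inc
     \<and> (\<forall>e\<in>E. \<not> hg_connected V (E - {e}) inc)"

definition hypertree_map :: "'b hypermap \<Rightarrow> bool" where
  "hypertree_map H \<longleftrightarrow> hypermap H \<and> hg_hypertree (hm_vertices H) (hm_hyperedges H) hm_inc"

end

theory Submission
  imports Defs
begin
lemma gen_rel_iff: "(x,y) \<in> gen_rel G \<longleftrightarrow> (\<exists>g\<in>G. y = g x)"
  by (auto simp: gen_rel_def)

lemma orbit_of_iff: "y \<in> orbit_of G x \<longleftrightarrow> (x,y) \<in> (gen_rel G)\<^sup>*"
  by (simp add: orbit_of_def)

lemma orbit_self: "x \<in> orbit_of G x"
  by (simp add: orbit_of_def)

lemma rtr_closed:
  assumes "(x,y) \<in> (gen_rel G)\<^sup>*" "x \<in> B" "\<forall>z\<in>B. \<forall>g\<in>G. g z \<in> B"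
  shows "y \<in> B"
  using assms(1,2)
proof (induction rule: rtrancl_induct)
  case base then show ?case by simp
next
  case (step y z) then show ?case using assms(3) by (auto simp: gen_rel_iff)
qed

lemma orbit_sub:
  assumes "x \<in> B" "\<forall>z\<in>B. \<forall>g\<in>G. g z \<in> B"
  shows "orbit_of G x \<subseteq> B"
  using rtr_closed[OF _ assms(1,2)] by (auto simp: orbit_of_def)

lemma step_rtr: "g \<in> G \<Longrightarrow> (x, g x) \<in> (gen_rel G)\<^sup>*"
  by (auto simp: gen_rel_def)

lemma step_rtr2: "g \<in> G \<Longrightarrow> g' \<in> G \<Longrightarrow> y = g' (g x) \<Longrightarrow> (x, y) \<in> (gen_rel G)\<^sup>*"
  by (meson rtrancl_trans step_rtr)

lemma step_rtr3: "g \<in> G \<Longrightarrow> g' \<in> G \<Longrightarrow> g'' \<in> G \<Longrightarrow> y = g'' (g' (g x)) \<Longrightarrow> (x, y) \<in> (gen_rel G)\<^sup>*"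
  by (meson rtrancl_trans step_rtr)

lemma contract_orbit:
  assumes sub: "B' \<subseteq> B"
    and clB: "\<forall>z\<in>B. \<forall>g\<in>G. g z \<in> B"
    and fwd: "\<forall>z\<in>B'. \<forall>g\<in>G'. g z \<in> B' \<and> (z, g z) \<in> (gen_rel G)\<^sup>*"
    and hB: "\<forall>z\<in>B. h z \<in> B'" and hid: "\<forall>z\<in>B'. h z = z"
    and hstep: "\<forall>z\<in>B. \<forall>g\<in>G. (h z, h (g z)) \<in> (gen_rel G')\<^sup>*"
    and x: "x \<in> B'"
  shows "orbit_of G' x = orbit_of G x \<inter> B'"
proof
  have "y \<in> B' \<and> (x,y) \<in> (gen_rel G)\<^sup>*" if "(x,y) \<in> (gen_rel G')\<^sup>*" for y
    using that
  proof (induction rule: rtrancl_induct)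
    case base then show ?case using x by simp
  next
    case (step y z)
    then obtain g where g: "g \<in> G'" "z = g y" by (auto simp: gen_rel_iff)
    then show ?case using step fwd by (meson rtrancl_trans)
  qed
  then show "orbit_of G' x \<subseteq> orbit_of G x \<inter> B'" by (auto simp: orbit_of_def)
next
  have xB: "x \<in> B" using x sub by auto
  have H: "y \<in> B \<and> (h x, h y) \<in> (gen_rel G')\<^sup>*" if "(x,y) \<in> (gen_rel G)\<^sup>*" for y
    using that
  proof (induction rule: rtrancl_induct)
    case base then show ?case using xB by simp
  next
    case (step y z)
    then obtain g where g: "g \<in> G" "z = g y" by (auto simp: gen_rel_iff)
    then show ?case using step hstep clB by (meson rtrancl_trans)
  qed
  then show "orbit_of G x \<inter> B' \<subseteq> orbit_of G' x"
  proof -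
    have "y \<in> orbit_of G' x" if "y \<in> orbit_of G x \<inter> B'" for y
    proof -
      have "(h x, h y) \<in> (gen_rel G')\<^sup>*" using that H by (auto simp: orbit_of_def)
      then show ?thesis using hid x that by (simp add: orbit_of_def)
    qed
    then show ?thesis by blast
  qed
qed

lemma orbit_equiv:
  assumes clB: "\<forall>z\<in>B. \<forall>g\<in>G. g z \<in> B"
    and bk: "\<forall>z\<in>B. \<forall>g\<in>G. (g z, z) \<in> (gen_rel G)\<^sup>*"
    and x: "x \<in> B" and y: "y \<in> orbit_of G x"
  shows "orbit_of G y = orbit_of G x"
proof -
  have "y' \<in> B \<and> (y', x) \<in> (gen_rel G)\<^sup>*" if "(x,y') \<in> (gen_rel G)\<^sup>*" for y'
    using that
  proof (induction rule: rtrancl_induct)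
    case base then show ?case using x by simp
  next
    case (step y z)
    then obtain g where g: "g \<in> G" "z = g y" by (auto simp: gen_rel_iff)
    then show ?case using step bk clB by (meson rtrancl_trans)
  qed
  then have "(y,x) \<in> (gen_rel G)\<^sup>*" using y by (auto simp: orbit_of_def)
  then show ?thesis using y unfolding orbit_of_def by (auto intro: rtrancl_trans)
qed

lemma count_orbits:
  assumes fin: "finite B" and sub: "B' \<subseteq> B"
    and clB: "\<forall>z\<in>B. \<forall>g\<in>G. g z \<in> B"
    and bk: "\<forall>z\<in>B. \<forall>g\<in>G. (g z, z) \<in> (gen_rel G)\<^sup>*"
    and eq: "\<forall>x\<in>B'. orbit_of G' x = orbit_of G x \<inter> B'"
  shows "num_orbits B G = num_orbits B' G' + card {Q \<in> orbit_of G ` B. Q \<inter> B' = {}}"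
proof -
  let ?P = "orbit_of G ` B"
  let ?P1 = "{Q \<in> ?P. Q \<inter> B' \<noteq> {}}"
  let ?P2 = "{Q \<in> ?P. Q \<inter> B' = {}}"
  have fP: "finite ?P" using fin by simp
  have "?P = ?P1 \<union> ?P2" by auto
  moreover have "card (?P1 \<union> ?P2) = card ?P1 + card ?P2"
    by (rule card_Un_disjoint) (use fP in auto)
  ultimately have "card ?P = card ?P1 + card ?P2" by simp
  moreover have "orbit_of G' ` B' = (\<lambda>Q. Q \<inter> B') ` ?P1"
  proof
    show "orbit_of G' ` B' \<subseteq> (\<lambda>Q. Q \<inter> B') ` ?P1"
    proof
      fix Q' assume "Q' \<in> orbit_of G' ` B'"
      then obtain x where x: "x \<in> B'" "Q' = orbit_of G' x" by auto
      then have "Q' = orbit_of G x \<inter> B'" using eq by auto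
      moreover have "orbit_of G x \<in> ?P1" using x sub orbit_self[of x G] by auto
      ultimately show "Q' \<in> (\<lambda>Q. Q \<inter> B') ` ?P1" by auto
    qed
  next
    show "(\<lambda>Q. Q \<inter> B') ` ?P1 \<subseteq> orbit_of G' ` B'"
    proof
      fix Q' assume "Q' \<in> (\<lambda>Q. Q \<inter> B') ` ?P1"
      then obtain x y where x: "x \<in> B" "Q' = orbit_of G x \<inter> B'" "y \<in> orbit_of G x" "y \<in> B'"
        by auto
      then have "orbit_of G y = orbit_of G x" using orbit_equiv[OF clB bk] by auto
      then have "Q' = orbit_of G' y" using eq x by auto
      then show "Q' \<in> orbit_of G' ` B'" using x by auto
    qed
  qed
  moreover have "inj_on (\<lambda>Q. Q \<inter> B') ?P1"
  proof (rule inj_onI)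
    fix Q1 Q2 assume a: "Q1 \<in> ?P1" "Q2 \<in> ?P1" "Q1 \<inter> B' = Q2 \<inter> B'"
    then obtain x1 x2 y where x: "x1 \<in> B" "Q1 = orbit_of G x1" "x2 \<in> B" "Q2 = orbit_of G x2"
      "y \<in> Q1" "y \<in> Q2" by blast
    then show "Q1 = Q2" using orbit_equiv[OF clB bk] by metis
  qed
  ultimately show ?thesis unfolding num_orbits_def by (simp add: card_image)
qed

lemma funpow_path: "(x, (f^^n) x) \<in> (gen_rel {f})\<^sup>*"
  by (induction n) (auto intro: rtrancl_into_rtrancl simp: gen_rel_def)

lemma perm_back:
  assumes fin: "finite B" and cl: "\<forall>z\<in>B. f z \<in> B" and inj: "inj_on f B" and x: "x \<in> B"
  shows "(f x, x) \<in> (gen_rel {f})\<^sup>*"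
proof -
  let ?s = "\<lambda>n. (f^^n) x"
  have sB: "?s n \<in> B" for n by (induction n) (use x cl in auto)
  have "finite (range ?s)" using sB fin by (meson finite_subset image_subsetI)
  then have "\<not> inj ?s" using finite_imageD infinite_UNIV_nat by blast
  then obtain i j where ij: "?s i = ?s j" "i \<noteq> j" unfolding inj_def by blast
  then obtain i m where im: "?s i = ?s (i + m)" "m > 0"
    by (metis less_imp_add_positive linorder_neqE_nat)
  have "?s 0 = ?s m" if "?s i = ?s (i + m)" for i
    using that
  proof (induction i)
    case 0 then show ?case by simp
  next
    case (Suc i)
    have "f (?s i) = f (?s (i + m))" using Suc.prems by simp
    then have "?s i = ?s (i + m)" using inj sB by (meson inj_onD)
    then show ?case using Suc.IH by simp
  qed
  then have "?s m = x" using im by simp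
  moreover have "?s m = (f^^(m - 1)) (f x)" using im(2)
    by (metis Suc_diff_1 funpow_Suc_right o_apply)
  ultimately show ?thesis using funpow_path[where x="f x" and f=f and n="m - 1"] by simp
qed

lemma nc_id:
  assumes "\<forall>x\<in>B. f x = x"
  shows "num_cycles B f = card B"
proof -
  have "orbit_of {f} x = {x}" if "x \<in> B" for x
  proof -
    have "y = x" if "(x,y) \<in> (gen_rel {f})\<^sup>*" for y
      using that by induction (use assms \<open>x \<in> B\<close> in \<open>auto simp: gen_rel_def\<close>)
    then show ?thesis by (auto simp: orbit_of_def)
  qed
  then have "orbit_of {f} ` B = (\<lambda>x. {x}) ` B" by auto
  then show ?thesis unfolding num_cycles_def num_orbits_def by (simp add: card_image)
qed

lemma fixed_orbit:
  assumes "f b = b" shows "orbit_of {f} b = {b}"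
proof -
  have "y = b" if "(b,y) \<in> (gen_rel {f})\<^sup>*" for y
    using that by induction (use assms in \<open>auto simp: gen_rel_def\<close>)
  then show ?thesis by (auto simp: orbit_of_def)
qed

lemma fpfD:
  assumes "fpf_involution B r" "x \<in> B"
  shows "r x \<in> B" "r (r x) = x" "r x \<noteq> x"
  using assms unfolding fpf_involution_def by blast+

lemma inv_closed:
  assumes "\<forall>g\<in>G. fpf_involution B g"
  shows "\<forall>z\<in>B. \<forall>g\<in>G. g z \<in> B"
  using assms unfolding fpf_involution_def by blast

lemma inv_back:
  assumes "\<forall>g\<in>G. fpf_involution B g"
  shows "\<forall>z\<in>B. \<forall>g\<in>G. (g z, z) \<in> (gen_rel G)\<^sup>*"
proof (intro ballI)
  fix z g assume "z \<in> B" "g \<in> G"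
  then have "g (g z) = z" using assms unfolding fpf_involution_def by blast
  then show "(g z, z) \<in> (gen_rel G)\<^sup>*" using step_rtr[OF \<open>g \<in> G\<close>, of "g z"] by simp
qed

lemma stepI: "g \<in> G \<Longrightarrow> g x = y \<Longrightarrow> (x, y) \<in> (gen_rel G)\<^sup>*"
  using step_rtr[of g G x] by simp

locale leafrm =
  fixes B :: "'b set" and p q r2 :: "'b \<Rightarrow> 'b" and b c a d :: 'b
    and B' :: "'b set" and p' :: "'b \<Rightarrow> 'b"
  assumes fin: "finite B" and fp: "fpf_involution B p" and fq: "fpf_involution B q"
    and fr: "fpf_involution B r2" and bB: "b \<in> B" and c_def: "c = r2 b" and qb: "q b = c"
    and a_def: "a = p b" and d_def: "d = p c" and ac: "a \<noteq> c"
    and B'_def: "B' = B - {b, c}" and p'_def: "p' = p(a := d, d := a)"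
begin

lemma f1: "c \<in> B" "b \<noteq> c" "q c = b" "r2 c = b" "a \<in> B" "d \<in> B" "a \<noteq> b" "d \<noteq> c"
  "p a = b" "p d = c" "r2 b = c"
proof -
  note P = fpfD[OF fp] and Q = fpfD[OF fq] and R = fpfD[OF fr]
  show c: "c \<in> B" using R(1)[OF bB] c_def by simp
  show "b \<noteq> c" using R(3)[OF bB] c_def by simp
  show "q c = b" using Q(2)[OF bB] qb by simp
  show "r2 c = b" using R(2)[OF bB] c_def by simp
  show "a \<in> B" using P(1)[OF bB] a_def by simp
  show "d \<in> B" using P(1)[OF c] d_def by simp
  show "a \<noteq> b" using P(3)[OF bB] a_def by simp
  show "d \<noteq> c" using P(3)[OF c] d_def by simp
  show "p a = b" using P(2)[OF bB] a_def by simp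
  show "p d = c" using P(2)[OF c] d_def by simp
  show "r2 b = c" using c_def by simp
qed

lemma f2: "d \<noteq> b" "a \<noteq> d" "r2 a \<noteq> b" "r2 a \<noteq> c" "r2 d \<noteq> b" "r2 d \<noteq> c"
  "r2 a \<in> B" "r2 d \<in> B"
proof -
  note P = fpfD[OF fp] and Q = fpfD[OF fq] and R = fpfD[OF fr]
  show db: "d \<noteq> b" proof assume "d = b" then have "p d = a" using a_def by simp
    then show False using f1 ac by simp qed
  show ad: "a \<noteq> d" proof assume "a = d" then have "p a = p d" by simp
    then show False using f1 by simp qed
  show "r2 a \<noteq> b" proof assume "r2 a = b" then have "r2 (r2 a) = c" using f1 by simp
    then show False using R(2)[OF f1(5)] ac by simp qed
  show "r2 a \<noteq> c" proof assume "r2 a = c" then have "r2 (r2 a) = b" using f1 by simp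
    then show False using R(2)[OF f1(5)] f1 by simp qed
  show "r2 d \<noteq> b" proof assume "r2 d = b" then have "r2 (r2 d) = c" using f1 by simp
    then show False using R(2)[OF f1(6)] f1 by simp qed
  show "r2 d \<noteq> c" proof assume "r2 d = c" then have "r2 (r2 d) = b" using f1 by simp
    then show False using R(2)[OF f1(6)] db by simp qed
  show "r2 a \<in> B" using R(1)[OF f1(5)] .
  show "r2 d \<in> B" using R(1)[OF f1(6)] .
qed

lemmas facts = f1 f2

lemma p_notbc: "x \<in> B \<Longrightarrow> x \<noteq> a \<Longrightarrow> x \<noteq> d \<Longrightarrow> p x \<noteq> b \<and> p x \<noteq> c"
proof -
  assume x: "x \<in> B" "x \<noteq> a" "x \<noteq> d"
  have "p (p x) = x" using fpfD(2)[OF fp x(1)] .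
  then show ?thesis using x a_def d_def by auto
qed

lemma q_notbc: "x \<in> B \<Longrightarrow> x \<noteq> b \<Longrightarrow> x \<noteq> c \<Longrightarrow> q x \<noteq> b \<and> q x \<noteq> c"
proof -
  assume x: "x \<in> B" "x \<noteq> b" "x \<noteq> c"
  have "q (q x) = x" using fpfD(2)[OF fq x(1)] .
  then show ?thesis using x qb f1(3) by metis
qed

lemma r2_notbc: "x \<in> B \<Longrightarrow> x \<noteq> b \<Longrightarrow> x \<noteq> c \<Longrightarrow> r2 x \<noteq> b \<and> r2 x \<noteq> c"
proof -
  assume x: "x \<in> B" "x \<noteq> b" "x \<noteq> c"
  have "r2 (r2 x) = x" using fpfD(2)[OF fr x(1)] .
  then show ?thesis using x f1(4,11) by metis
qed

lemma p'_simps: "p' a = d" "p' d = a" "x \<noteq> a \<Longrightarrow> x \<noteq> d \<Longrightarrow> p' x = p x"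
  using p'_def f2(2) by auto

lemma B'_mem: "x \<in> B' \<longleftrightarrow> x \<in> B \<and> x \<noteq> b \<and> x \<noteq> c"
  using B'_def by auto

lemma aB': "a \<in> B'" and dB': "d \<in> B'"
  using B'_mem facts by auto

lemma fpf_new: "fpf_involution B' p'" "fpf_involution B' q" "fpf_involution B' r2"
proof -
  show "fpf_involution B' p'" unfolding fpf_involution_def
  proof
    fix x assume x: "x \<in> B'"
    show "p' x \<in> B' \<and> p' (p' x) = x \<and> p' x \<noteq> x"
    proof (cases "x = a")
      case True then show ?thesis using p'_simps(1,2) dB' f2(2) by simp
    next
      case xa: False
      show ?thesis
      proof (cases "x = d")
        case True then show ?thesis using p'_simps(1,2) aB' f2(2) by simp
      next
        case xd: False
        have xB: "x \<in> B" and xbc: "x \<noteq> b" "x \<noteq> c" using x B'_mem by auto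
        have px: "p x \<noteq> b" "p x \<noteq> c" using p_notbc[OF xB xa xd] by auto
        have pxa: "p x \<noteq> a" using fpfD(2)[OF fp xB] xbc f1(9) by metis
        have pxd: "p x \<noteq> d" using fpfD(2)[OF fp xB] xbc f1(10) by metis
        have "p' x = p x" using p'_simps(3)[OF xa xd] .
        moreover have "p' (p x) = p (p x)" using p'_simps(3)[OF pxa pxd] .
        moreover have "p x \<in> B'" using fpfD(1)[OF fp xB] px B'_mem by simp
        ultimately show ?thesis using fpfD(2,3)[OF fp xB] by simp
      qed
    qed
  qed
  show "fpf_involution B' q" unfolding fpf_involution_def
  proof
    fix x assume x: "x \<in> B'"
    then have xB: "x \<in> B" "x \<noteq> b" "x \<noteq> c" using B'_mem by auto
    have "q x \<in> B'" using fpfD(1)[OF fq xB(1)] q_notbc[OF xB] B'_mem by simp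
    then show "q x \<in> B' \<and> q (q x) = x \<and> q x \<noteq> x" using fpfD(2,3)[OF fq xB(1)] by simp
  qed
  show "fpf_involution B' r2" unfolding fpf_involution_def
  proof
    fix x assume x: "x \<in> B'"
    then have xB: "x \<in> B" "x \<noteq> b" "x \<noteq> c" using B'_mem by auto
    have "r2 x \<in> B'" using fpfD(1)[OF fr xB(1)] r2_notbc[OF xB] B'_mem by simp
    then show "r2 x \<in> B' \<and> r2 (r2 x) = x \<and> r2 x \<noteq> x" using fpfD(2,3)[OF fr xB(1)] by simp
  qed
qed

lemma orbit_bc: "orbit_of {q, r2} b = {b, c}" "orbit_of {q, r2} c = {b, c}"
proof -
  have cl: "\<forall>z\<in>{b,c}. \<forall>g\<in>{q,r2}. g z \<in> {b,c}" using f1(3,4,11) qb by simp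
  have s1: "orbit_of {q, r2} b \<subseteq> {b,c}" using orbit_sub[OF _ cl, of b] by simp
  have s2: "orbit_of {q, r2} c \<subseteq> {b,c}" using orbit_sub[OF _ cl, of c] by simp
  have "(b, c) \<in> (gen_rel {q, r2})\<^sup>*" by (rule stepI[of r2]) (simp_all add: f1(11))
  then have m1: "c \<in> orbit_of {q, r2} b" by (simp add: orbit_of_def)
  have "(c, b) \<in> (gen_rel {q, r2})\<^sup>*" by (rule stepI[of r2]) (simp_all add: f1(4))
  then have m2: "b \<in> orbit_of {q, r2} c" by (simp add: orbit_of_def)
  show "orbit_of {q, r2} b = {b, c}" using s1 m1 orbit_self[of b] by blast
  show "orbit_of {q, r2} c = {b, c}" using s2 m2 orbit_self[of c] by blast
qed

lemma B'_sub: "B' \<subseteq> B" using B'_def by auto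

lemma fwd_inv:
  assumes "\<forall>g\<in>G. fpf_involution B' g"
  shows "\<forall>z\<in>B'. \<forall>g\<in>G. g z \<in> B' \<and> (z, g z) \<in> (gen_rel G)\<^sup>*"
proof (intro ballI conjI)
  fix z g assume "z \<in> B'" "g \<in> G"
  then show "g z \<in> B'" using inv_closed[OF assms] by blast
  show "(z, g z) \<in> (gen_rel G)\<^sup>*" using step_rtr[OF \<open>g \<in> G\<close>] .
qed

lemma V_orb: "x \<in> B' \<Longrightarrow> orbit_of {q, r2} x = orbit_of {q, r2} x \<inter> B'"
proof (rule contract_orbit[where B=B and h="\<lambda>z. if z = b \<or> z = c then a else z"])
  show "B' \<subseteq> B" by (rule B'_sub)
  show "\<forall>z\<in>B. \<forall>g\<in>{q, r2}. g z \<in> B" using inv_closed[of "{q,r2}" B] fq fr by simp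
  show "\<forall>z\<in>B'. \<forall>g\<in>{q, r2}. g z \<in> B' \<and> (z, g z) \<in> (gen_rel {q, r2})\<^sup>*"
    using fwd_inv[of "{q,r2}"] fpf_new by simp
  show "\<forall>z\<in>B. (if z = b \<or> z = c then a else z) \<in> B'" using aB' B'_mem by simp
  show "\<forall>z\<in>B'. (if z = b \<or> z = c then a else z) = z" using B'_mem by simp
  show "\<forall>z\<in>B. \<forall>g\<in>{q, r2}. ((if z = b \<or> z = c then a else z), (if g z = b \<or> g z = c then a else g z))
          \<in> (gen_rel {q, r2})\<^sup>*"
  proof (intro ballI)
    fix z g assume z: "z \<in> B" and g: "g \<in> {q, r2}"
    show "((if z = b \<or> z = c then a else z), (if g z = b \<or> g z = c then a else g z)) \<in> (gen_rel {q, r2})\<^sup>*"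
    proof (cases "z = b \<or> z = c")
      case True
      then have "g z = b \<or> g z = c" using g f1(3,4,11) qb by auto
      then show ?thesis using True by simp
    next
      case False
      then have "g z \<noteq> b \<and> g z \<noteq> c" using g q_notbc r2_notbc z by auto
      then show ?thesis using False step_rtr[OF g, of z] by simp
    qed
  qed
qed

lemma V_count: "num_orbits B {q, r2} = num_orbits B' {q, r2} + 1"
proof -
  have "num_orbits B {q, r2} = num_orbits B' {q, r2} + card {Q \<in> orbit_of {q,r2} ` B. Q \<inter> B' = {}}"
  proof (rule count_orbits)
    show "finite B" by (rule fin)
    show "B' \<subseteq> B" by (rule B'_sub)
    show "\<forall>z\<in>B. \<forall>g\<in>{q, r2}. g z \<in> B" using inv_closed[of "{q,r2}" B] fq fr by simp
    show "\<forall>z\<in>B. \<forall>g\<in>{q, r2}. (g z, z) \<in> (gen_rel {q, r2})\<^sup>*" using inv_back[of "{q,r2}" B] fq fr by simp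
    show "\<forall>x\<in>B'. orbit_of {q, r2} x = orbit_of {q, r2} x \<inter> B'" using V_orb by simp
  qed
  moreover have "{Q \<in> orbit_of {q,r2} ` B. Q \<inter> B' = {}} = {{b,c}}"
  proof -
    have ne: "orbit_of {q,r2} x \<inter> B' \<noteq> {}" if "x \<in> B'" for x using that orbit_self[of x] by auto
    have bc: "{b,c} \<inter> B' = {}" using B'_mem by auto
    show ?thesis
    proof (intro equalityI subsetI)
      fix Q assume "Q \<in> {Q \<in> orbit_of {q,r2} ` B. Q \<inter> B' = {}}"
      then obtain x where x: "x \<in> B" "Q = orbit_of {q,r2} x" "Q \<inter> B' = {}" by auto
      then have "x = b \<or> x = c" using ne B'_mem by blast
      then show "Q \<in> {{b,c}}" using x orbit_bc by auto
    next
      fix Q assume "Q \<in> {{b,c}}"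
      then show "Q \<in> {Q \<in> orbit_of {q,r2} ` B. Q \<inter> B' = {}}" using orbit_bc bB bc by auto
    qed
  qed
  ultimately show ?thesis by simp
qed

lemma E_orb: "x \<in> B' \<Longrightarrow> orbit_of {p', r2} x = orbit_of {p, r2} x \<inter> B'"
proof -
  assume x: "x \<in> B'"
  define h where "h z = (if z = b then a else if z = c then d else z)" for z
  let ?R' = "(gen_rel {p', r2})\<^sup>*"
  let ?R = "(gen_rel {p, r2})\<^sup>*"
  have fwd: "\<forall>z\<in>B'. \<forall>g\<in>{p', r2}. g z \<in> B' \<and> (z, g z) \<in> ?R"
  proof (intro ballI conjI)
    fix z g assume z: "z \<in> B'" and g: "g \<in> {p', r2}"
    show "g z \<in> B'" using inv_closed[of "{p', r2}" B'] fpf_new z g by auto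
    have zB: "z \<in> B" using z B'_mem by simp
    show "(z, g z) \<in> ?R"
    proof (cases "g = r2")
      case True then show ?thesis using step_rtr[of r2 "{p, r2}" z] by simp
    next
      case False
      then have gp: "g = p'" using g by simp
      show ?thesis
      proof (cases "z = a")
        case True
        have "d = p (r2 (p z))" using True f1(9,11) d_def by simp
        then show ?thesis using step_rtr3[of p "{p,r2}" r2 p "g z" z] gp True p'_simps by simp
      next
        case za: False
        show ?thesis
        proof (cases "z = d")
          case True
          have "a = p (r2 (p z))" using True f1(10,4) a_def by simp
          then show ?thesis using step_rtr3[of p "{p,r2}" r2 p "g z" z] gp True p'_simps by simp
        next
          case False
          then show ?thesis using gp za p'_simps(3)[of z] step_rtr[of p "{p,r2}" z] by simp
        qed
      qed
    qed
  qed
  have hB: "\<forall>z\<in>B. h z \<in> B'" using aB' dB' B'_mem h_def by simp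
  have hid: "\<forall>z\<in>B'. h z = z" using B'_mem h_def by simp
  have hstep: "\<forall>z\<in>B. \<forall>g\<in>{p, r2}. (h z, h (g z)) \<in> ?R'"
  proof (intro ballI)
    fix z g assume z: "z \<in> B" and g: "g \<in> {p, r2}"
    show "(h z, h (g z)) \<in> ?R'"
    proof (cases "g = r2")
      case gr: True
      show ?thesis
      proof (cases "z = b \<or> z = c")
        case True
        then show ?thesis
        proof
          assume zb: "z = b"
          have "h z = a" "h (g z) = d" using zb gr h_def f1(2,11) by auto
          then show ?thesis using stepI[of p' "{p', r2}" a d] p'_simps by simp
        next
          assume zc: "z = c"
          have "h z = d" "h (g z) = a" using zc gr h_def f1(2,4) by auto
          then show ?thesis using stepI[of p' "{p', r2}" d a] p'_simps by simp
        qed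
      next
        case False
        then have "g z \<noteq> b \<and> g z \<noteq> c" using gr r2_notbc z by auto
        then show ?thesis using False gr h_def step_rtr[of r2 "{p', r2}" z] by simp
      qed
    next
      case False
      then have gp: "g = p" using g by simp
      have hab: "h a = a" "h d = d" "h b = a" "h c = d"
        using h_def facts by auto
      show ?thesis
      proof (cases "z = a \<or> z = b \<or> z = c \<or> z = d")
        case True
        then show ?thesis using gp hab f1(9,10,11) a_def d_def by auto
      next
        case False
        then have "p z \<noteq> b \<and> p z \<noteq> c" using p_notbc z by auto
        then have "h z = z" "h (g z) = p' z" using False gp h_def p'_simps(3)[of z] by auto
        then show ?thesis using step_rtr[of p' "{p', r2}" z] by simp
      qed
    qed
  qed
  show ?thesis
    by (rule contract_orbit[OF B'_sub _ fwd hB hid hstep x])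
       (use inv_closed[of "{p,r2}" B] fp fr in simp)
qed

lemma E_count: "num_orbits B {p, r2} = num_orbits B' {p', r2}"
proof -
  have "num_orbits B {p, r2} = num_orbits B' {p', r2} + card {Q \<in> orbit_of {p,r2} ` B. Q \<inter> B' = {}}"
  proof (rule count_orbits)
    show "finite B" by (rule fin)
    show "B' \<subseteq> B" by (rule B'_sub)
    show "\<forall>z\<in>B. \<forall>g\<in>{p, r2}. g z \<in> B" using inv_closed[of "{p,r2}" B] fp fr by simp
    show "\<forall>z\<in>B. \<forall>g\<in>{p, r2}. (g z, z) \<in> (gen_rel {p, r2})\<^sup>*" using inv_back[of "{p,r2}" B] fp fr by simp
    show "\<forall>x\<in>B'. orbit_of {p', r2} x = orbit_of {p, r2} x \<inter> B'" using E_orb by simp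
  qed
  moreover have "{Q \<in> orbit_of {p,r2} ` B. Q \<inter> B' = {}} = {}"
  proof -
    have ne: "orbit_of {p,r2} x \<inter> B' \<noteq> {}" if "x \<in> B'" for x using that orbit_self[of x] by auto
    have "(b, a) \<in> (gen_rel {p, r2})\<^sup>*" using stepI[of p "{p,r2}" b a] a_def by simp
    then have "a \<in> orbit_of {p,r2} b" by (simp add: orbit_of_def)
    then have nb: "orbit_of {p,r2} b \<inter> B' \<noteq> {}" using aB' by auto
    have "(c, d) \<in> (gen_rel {p, r2})\<^sup>*" using stepI[of p "{p,r2}" c d] d_def by simp
    then have "d \<in> orbit_of {p,r2} c" by (simp add: orbit_of_def)
    then have nc: "orbit_of {p,r2} c \<inter> B' \<noteq> {}" using dB' by auto
    have "orbit_of {p,r2} x \<inter> B' \<noteq> {}" if "x \<in> B" for x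
      using ne nb nc B'_mem that by metis
    then show ?thesis by auto
  qed
  ultimately show ?thesis by simp
qed

lemma C_orb: "x \<in> B' \<Longrightarrow> orbit_of {p', q, r2} x = orbit_of {p, q, r2} x \<inter> B'"
proof -
  assume x: "x \<in> B'"
  define h where "h z = (if z = b then a else if z = c then d else z)" for z
  let ?R' = "(gen_rel {p', q, r2})\<^sup>*"
  let ?R = "(gen_rel {p, q, r2})\<^sup>*"
  have fwd: "\<forall>z\<in>B'. \<forall>g\<in>{p', q, r2}. g z \<in> B' \<and> (z, g z) \<in> ?R"
  proof (intro ballI conjI)
    fix z g assume z: "z \<in> B'" and g: "g \<in> {p', q, r2}"
    show "g z \<in> B'" using inv_closed[of "{p', q, r2}" B'] fpf_new z g by auto
    have zB: "z \<in> B" using z B'_mem by simp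
    show "(z, g z) \<in> ?R"
    proof (cases "g = r2 \<or> g = q")
      case True then show ?thesis using step_rtr[of r2 "{p, q, r2}" z] step_rtr[of q "{p, q, r2}" z] by auto
    next
      case False
      then have gp: "g = p'" using g by simp
      show ?thesis
      proof (cases "z = a")
        case True
        have "d = p (r2 (p z))" using True f1(9,11) d_def by simp
        then show ?thesis using step_rtr3[of p "{p,q,r2}" r2 p "g z" z] gp True p'_simps by simp
      next
        case za: False
        show ?thesis
        proof (cases "z = d")
          case True
          have "a = p (r2 (p z))" using True f1(10,4) a_def by simp
          then show ?thesis using step_rtr3[of p "{p,q,r2}" r2 p "g z" z] gp True p'_simps by simp
        next
          case False
          then show ?thesis using gp za p'_simps(3)[of z] step_rtr[of p "{p,q,r2}" z] by simp
        qed
      qed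
    qed
  qed
  have hB: "\<forall>z\<in>B. h z \<in> B'" using aB' dB' B'_mem h_def by simp
  have hid: "\<forall>z\<in>B'. h z = z" using B'_mem h_def by simp
  have hstep: "\<forall>z\<in>B. \<forall>g\<in>{p, q, r2}. (h z, h (g z)) \<in> ?R'"
  proof (intro ballI)
    fix z g assume z: "z \<in> B" and g: "g \<in> {p, q, r2}"
    show "(h z, h (g z)) \<in> ?R'"
    proof (cases "g = r2 \<or> g = q")
      case gr: True
      have gb: "g b = c" and gc: "g c = b" using gr f1(3,4,11) qb by auto
      show ?thesis
      proof (cases "z = b \<or> z = c")
        case True
        then show ?thesis
        proof
          assume zb: "z = b"
          have "h z = a" "h (g z) = d" using zb gb h_def f1(2) by auto
          then show ?thesis using stepI[of p' "{p', q, r2}" a d] p'_simps by simp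
        next
          assume zc: "z = c"
          have "h z = d" "h (g z) = a" using zc gc h_def f1(2) by auto
          then show ?thesis using stepI[of p' "{p', q, r2}" d a] p'_simps by simp
        qed
      next
        case False
        then have "g z \<noteq> b \<and> g z \<noteq> c" using gr r2_notbc q_notbc z by auto
        then show ?thesis using False gr h_def step_rtr[of r2 "{p', q, r2}" z] step_rtr[of q "{p', q, r2}" z]
          by auto
      qed
    next
      case False
      then have gp: "g = p" using g by simp
      have hab: "h a = a" "h d = d" "h b = a" "h c = d"
        using h_def facts by auto
      show ?thesis
      proof (cases "z = a \<or> z = b \<or> z = c \<or> z = d")
        case True
        then show ?thesis using gp hab f1(9,10,11) a_def d_def by auto
      next
        case False
        then have "p z \<noteq> b \<and> p z \<noteq> c" using p_notbc z by auto
        then have "h z = z" "h (g z) = p' z" using False gp h_def p'_simps(3)[of z] by auto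
        then show ?thesis using step_rtr[of p' "{p', q, r2}" z] by simp
      qed
    qed
  qed
  show ?thesis
    by (rule contract_orbit[OF B'_sub _ fwd hB hid hstep x])
       (use inv_closed[of "{p,q,r2}" B] fp fq fr in simp)
qed

end

lemma chain_map:
  assumes ch: "hg_chain V E inc vs es"
    and fi: "inj_on f V" and gi: "inj_on g E" and fV: "f ` V \<subseteq> V2" and gE: "g ` E \<subseteq> E2"
    and inc: "\<forall>v\<in>V. \<forall>e\<in>E. inc v e \<longrightarrow> inc2 (f v) (g e)"
  shows "hg_chain V2 E2 inc2 (map f vs) (map g es)"
proof -
  have l: "length vs = length es + 1" and sv: "set vs \<subseteq> V" and se: "set es \<subseteq> E"
    and i: "\<forall>i<length es. inc (vs ! i) (es ! i) \<and> inc (vs ! Suc i) (es ! i)"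
    and de: "distinct es" and dt: "distinct (tl vs)" and db: "distinct (butlast vs)"
    using ch unfolding hg_chain_def by auto
  have "\<forall>i<length es. inc2 (f (vs ! i)) (g (es ! i)) \<and> inc2 (f (vs ! Suc i)) (g (es ! i))"
  proof (intro allI impI)
    fix i assume "i < length es"
    then have "vs ! i \<in> V" "vs ! Suc i \<in> V" "es ! i \<in> E" using sv se l by (auto simp: nth_mem subsetD)
    then show "inc2 (f (vs ! i)) (g (es ! i)) \<and> inc2 (f (vs ! Suc i)) (g (es ! i))"
      using inc i \<open>i < length es\<close> by blast
  qed
  moreover have "distinct (map g es)" using de gi se by (simp add: distinct_map inj_on_subset)
  moreover have "distinct (tl (map f vs))"
  proof -
    have "set (tl vs) \<subseteq> V" using sv by (cases vs) auto
    then show ?thesis using dt fi by (simp add: map_tl[symmetric] distinct_map inj_on_subset)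
  qed
  moreover have "distinct (butlast (map f vs))"
  proof -
    have "set (butlast vs) \<subseteq> V" using sv in_set_butlastD by fastforce
    then show ?thesis using db fi by (simp add: map_butlast[symmetric] distinct_map inj_on_subset)
  qed
  moreover have "set (map f vs) \<subseteq> V2" using sv fV by auto
  moreover have "set (map g es) \<subseteq> E2" using se gE by auto
  ultimately show ?thesis unfolding hg_chain_def using l by simp
qed

lemma cycle_map:
  assumes cy: "hg_cycle V E inc vs es"
    and fi: "inj_on f V" and gi: "inj_on g E" and fV: "f ` V \<subseteq> V2" and gE: "g ` E \<subseteq> E2"
    and inc: "\<forall>v\<in>V. \<forall>e\<in>E. inc v e \<longrightarrow> inc2 (f v) (g e)"
  shows "hg_cycle V2 E2 inc2 (map f vs) (map g es)"
proof -
  have ch: "hg_chain V E inc vs es" and l2: "length es \<ge> 2" and hl: "hd vs = last vs"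
    using cy unfolding hg_cycle_def by auto
  have "vs \<noteq> []" using ch unfolding hg_chain_def by auto
  then have "hd (map f vs) = last (map f vs)" using hl by (simp add: hd_map last_map)
  then show ?thesis using chain_map[OF ch fi gi fV gE inc] l2 unfolding hg_cycle_def by simp
qed

lemma lift_orbit:
  assumes sub: "B' \<subseteq> B" and cl: "\<forall>z\<in>B. \<forall>g\<in>G. g z \<in> B"
    and bk: "\<forall>z\<in>B. \<forall>g\<in>G. (g z, z) \<in> (gen_rel G)\<^sup>*"
    and eq: "\<forall>x\<in>B'. orbit_of G' x = orbit_of G x \<inter> B'" and x: "x \<in> B'"
  shows "orbit_of G (SOME y. y \<in> orbit_of G' x) = orbit_of G x"
proof -
  have "\<exists>y. y \<in> orbit_of G' x" using orbit_self by fast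
  then have "(SOME y. y \<in> orbit_of G' x) \<in> orbit_of G' x" by (rule someI_ex)
  then have "(SOME y. y \<in> orbit_of G' x) \<in> orbit_of G x" using eq x by auto
  then show ?thesis using orbit_equiv[OF cl bk] x sub by auto
qed

lemma restrict_struct:
  assumes fin: "finite B" and sub: "B' \<subseteq> B"
    and clV: "\<forall>z\<in>B. \<forall>g\<in>VG. g z \<in> B" and bkV: "\<forall>z\<in>B. \<forall>g\<in>VG. (g z, z) \<in> (gen_rel VG)\<^sup>*"
    and clE: "\<forall>z\<in>B. \<forall>g\<in>EG. g z \<in> B" and bkE: "\<forall>z\<in>B. \<forall>g\<in>EG. (g z, z) \<in> (gen_rel EG)\<^sup>*"
    and eqV: "\<forall>x\<in>B'. orbit_of VG' x = orbit_of VG x \<inter> B'"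
    and eqE: "\<forall>x\<in>B'. orbit_of EG' x = orbit_of EG x \<inter> B'"
    and card2: "\<forall>v\<in>orbit_of VG ` B. \<forall>e\<in>orbit_of EG ` B. card (v \<inter> e) \<le> 2"
    and nocyc: "\<not> hg_has_cycle (orbit_of VG ` B) (orbit_of EG ` B) hm_inc"
  shows "\<forall>v\<in>orbit_of VG' ` B'. \<forall>e\<in>orbit_of EG' ` B'. card (v \<inter> e) \<le> 2"
    and "\<not> hg_has_cycle (orbit_of VG' ` B') (orbit_of EG' ` B') hm_inc"
proof -
  show "\<forall>v\<in>orbit_of VG' ` B'. \<forall>e\<in>orbit_of EG' ` B'. card (v \<inter> e) \<le> 2"
  proof (intro ballI)
    fix v e assume v: "v \<in> orbit_of VG' ` B'" and e: "e \<in> orbit_of EG' ` B'"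
    then obtain x y where xy: "x \<in> B'" "y \<in> B'" "v = orbit_of VG' x" "e = orbit_of EG' y" by auto
    then have "v \<inter> e \<subseteq> orbit_of VG x \<inter> orbit_of EG y" using eqV eqE by auto
    moreover have "finite (orbit_of VG x \<inter> orbit_of EG y)"
      using orbit_sub[OF _ clV, of x] xy sub fin by (meson finite_Int finite_subset subsetD)
    moreover have "card (orbit_of VG x \<inter> orbit_of EG y) \<le> 2" using card2 xy sub by auto
    ultimately show "card (v \<inter> e) \<le> 2" by (meson card_mono le_trans)
  qed
  define f where "f Q = orbit_of VG (SOME y. y \<in> Q)" for Q
  define g where "g Q = orbit_of EG (SOME y. y \<in> Q)" for Q
  have fx: "f (orbit_of VG' x) = orbit_of VG x" if "x \<in> B'" for x
    using lift_orbit[OF sub clV bkV eqV that] f_def by simp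
  have gx: "g (orbit_of EG' x) = orbit_of EG x" if "x \<in> B'" for x
    using lift_orbit[OF sub clE bkE eqE that] g_def by simp
  have fi: "inj_on f (orbit_of VG' ` B')"
  proof (rule inj_onI)
    fix Q1 Q2 assume "Q1 \<in> orbit_of VG' ` B'" "Q2 \<in> orbit_of VG' ` B'" "f Q1 = f Q2"
    then obtain x1 x2 where "x1 \<in> B'" "x2 \<in> B'" "Q1 = orbit_of VG' x1" "Q2 = orbit_of VG' x2"
      "orbit_of VG x1 = orbit_of VG x2" using fx by auto
    then show "Q1 = Q2" using eqV by auto
  qed
  have gi: "inj_on g (orbit_of EG' ` B')"
  proof (rule inj_onI)
    fix Q1 Q2 assume "Q1 \<in> orbit_of EG' ` B'" "Q2 \<in> orbit_of EG' ` B'" "g Q1 = g Q2"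
    then obtain x1 x2 where "x1 \<in> B'" "x2 \<in> B'" "Q1 = orbit_of EG' x1" "Q2 = orbit_of EG' x2"
      "orbit_of EG x1 = orbit_of EG x2" using gx by auto
    then show "Q1 = Q2" using eqE by auto
  qed
  have fV: "f ` (orbit_of VG' ` B') \<subseteq> orbit_of VG ` B" using fx sub by auto
  have gE: "g ` (orbit_of EG' ` B') \<subseteq> orbit_of EG ` B" using gx sub by auto
  have inc: "\<forall>v\<in>orbit_of VG' ` B'. \<forall>e\<in>orbit_of EG' ` B'. hm_inc v e \<longrightarrow> hm_inc (f v) (g e)"
  proof (intro ballI impI)
    fix v e assume v: "v \<in> orbit_of VG' ` B'" and e: "e \<in> orbit_of EG' ` B'" and i: "hm_inc v e"
    then obtain x y where xy: "x \<in> B'" "y \<in> B'" "v = orbit_of VG' x" "e = orbit_of EG' y" by auto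
    then have "v \<inter> e \<subseteq> f v \<inter> g e" using eqV eqE fx gx by auto
    then show "hm_inc (f v) (g e)" using i unfolding hm_inc_def by auto
  qed
  show "\<not> hg_has_cycle (orbit_of VG' ` B') (orbit_of EG' ` B') hm_inc"
  proof
    assume "hg_has_cycle (orbit_of VG' ` B') (orbit_of EG' ` B') hm_inc"
    then obtain vs es where "hg_cycle (orbit_of VG' ` B') (orbit_of EG' ` B') hm_inc vs es"
      unfolding hg_has_cycle_def by auto
    from cycle_map[OF this fi gi fV gE inc] nocyc show False unfolding hg_has_cycle_def by blast
  qed
qed

lemma cycle_from_seq:
  assumes pq: "Suc p < q" and cl: "VV p = VV q"
    and i1: "inj_on VV {p..<q}" and i2: "inj_on VV {Suc p..q}" and i3: "inj_on EE {p..<q}"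
    and inc: "\<forall>k\<in>{p..<q}. inc (VV k) (EE k) \<and> inc (VV (Suc k)) (EE k)"
    and sV: "VV ` {p..q} \<subseteq> V" and sE: "EE ` {p..<q} \<subseteq> E"
  shows "hg_cycle V E inc (map VV [p..<Suc q]) (map EE [p..<q])"
proof -
  have up: "[p..<Suc q] = [p..<q] @ [q]" using pq by simp
  have len: "length (map VV [p..<Suc q]) = length (map EE [p..<q]) + 1" using pq by simp
  have s1: "set (map VV [p..<Suc q]) \<subseteq> V" using sV by auto
  have s2: "set (map EE [p..<q]) \<subseteq> E" using sE by auto
  have ii: "\<forall>i<length (map EE [p..<q]). inc (map VV [p..<Suc q] ! i) (map EE [p..<q] ! i)
      \<and> inc (map VV [p..<Suc q] ! Suc i) (map EE [p..<q] ! i)"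
  proof (intro allI impI)
    fix i assume "i < length (map EE [p..<q])"
    then have i: "i < q - p" by simp
    then have "map VV [p..<Suc q] ! i = VV (p + i)" "map VV [p..<Suc q] ! Suc i = VV (Suc (p + i))"
      "map EE [p..<q] ! i = EE (p + i)" by (simp_all del: upt_Suc add: nth_map_upt)
    moreover have "p + i \<in> {p..<q}" using i by simp
    ultimately show "inc (map VV [p..<Suc q] ! i) (map EE [p..<q] ! i)
      \<and> inc (map VV [p..<Suc q] ! Suc i) (map EE [p..<q] ! i)" using inc by simp
  qed
  have d1: "distinct (map EE [p..<q])" using i3 by (simp add: distinct_map)
  have d2: "distinct (tl (map VV [p..<Suc q]))"
  proof -
    have "tl [p..<Suc q] = [Suc p..<Suc q]" by (simp only: tl_upt)
    moreover have "set [Suc p..<Suc q] = {Suc p..q}" by auto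
    ultimately show ?thesis using i2 by (simp del: upt_Suc add: map_tl[symmetric] distinct_map)
  qed
  have d3: "distinct (butlast (map VV [p..<Suc q]))"
    using i1 up by (simp add: map_butlast[symmetric] distinct_map)
  have hl: "hd (map VV [p..<Suc q]) = last (map VV [p..<Suc q])"
    using cl pq by (simp add: hd_map last_map)
  show ?thesis unfolding hg_cycle_def hg_chain_def
    using len s1 s2 ii d1 d2 d3 hl pq by simp
qed

lemma walk_cycle:
  fixes VV EE :: "nat \<Rightarrow> 'a"
  assumes fV: "finite V" and fE: "finite E"
    and rV: "\<And>k. VV k \<in> V" and rE: "\<And>k. EE k \<in> E"
    and inc: "\<And>k. inc (VV k) (EE k) \<and> inc (VV (Suc k)) (EE k)"
    and nbV: "\<And>k. VV k \<noteq> VV (Suc k)" and nbE: "\<And>k. EE k \<noteq> EE (Suc k)"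
  shows "hg_has_cycle V E inc"
proof -
  define repV where "repV d \<longleftrightarrow> d > 0 \<and> (\<exists>i. VV i = VV (i + d))" for d
  define repE where "repE d \<longleftrightarrow> d > 0 \<and> (\<exists>i. EE i = EE (i + d))" for d
  have exV: "\<exists>d. repV d"
  proof -
    have "\<not> inj VV"
    proof
      assume "inj VV"
      moreover have "finite (range VV)" using rV fV by (meson finite_subset image_subsetI)
      ultimately show False using finite_imageD infinite_UNIV_nat by blast
    qed
    then obtain m n where "VV m = VV n" "m < n" unfolding inj_def by (metis linorder_neqE_nat)
    then have "repV (n - m)" unfolding repV_def by (metis add_diff_inverse_nat less_imp_le_nat
          not_less zero_less_diff)
    then show ?thesis by blast
  qed
  have exE: "\<exists>d. repE d"
  proof -
    have "\<not> inj EE"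
    proof
      assume "inj EE"
      moreover have "finite (range EE)" using rE fE by (meson finite_subset image_subsetI)
      ultimately show False using finite_imageD infinite_UNIV_nat by blast
    qed
    then obtain m n where "EE m = EE n" "m < n" unfolding inj_def by (metis linorder_neqE_nat)
    then have "repE (n - m)" unfolding repE_def by (metis add_diff_inverse_nat less_imp_le_nat
          not_less zero_less_diff)
    then show ?thesis by blast
  qed
  define dV where "dV = (LEAST d. repV d)"
  define dE where "dE = (LEAST d. repE d)"
  have dVr: "repV dV" using exV dV_def by (metis LeastI_ex)
  have dEr: "repE dE" using exE dE_def by (metis LeastI_ex)
  have dVm: "\<not> repV d" if "d < dV" for d using that dV_def not_less_Least by blast
  have dEm: "\<not> repE d" if "d < dE" for d using that dE_def not_less_Least by blast
  have noV: "VV m \<noteq> VV n" if "m < n" "n - m < dV" for m n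
  proof
    assume "VV m = VV n"
    then have "repV (n - m)" unfolding repV_def using that(1) by (auto intro: exI[of _ m])
    then show False using dVm that(2) by blast
  qed
  have noE: "EE m \<noteq> EE n" if "m < n" "n - m < dE" for m n
  proof
    assume "EE m = EE n"
    then have "repE (n - m)" unfolding repE_def using that(1) by (auto intro: exI[of _ m])
    then show False using dEm that(2) by blast
  qed
  show ?thesis
  proof (cases "dV \<le> dE")
    case True
    obtain i where i: "VV i = VV (i + dV)" using dVr repV_def by blast
    have "dV \<noteq> 1" using i nbV by auto
    then have pq: "Suc i < i + dV" using dVr repV_def by auto
    have "hg_cycle V E inc (map VV [i..<Suc (i + dV)]) (map EE [i..<i + dV])"
    proof (rule cycle_from_seq[OF pq i])
      show "inj_on VV {i..<i + dV}" by (rule linorder_inj_onI') (use noV in auto)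
      show "inj_on VV {Suc i..i + dV}" by (rule linorder_inj_onI') (use noV in auto)
      show "inj_on EE {i..<i + dV}" by (rule linorder_inj_onI') (use noE True in auto)
      show "\<forall>k\<in>{i..<i + dV}. inc (VV k) (EE k) \<and> inc (VV (Suc k)) (EE k)" using inc by simp
      show "VV ` {i..i + dV} \<subseteq> V" using rV by auto
      show "EE ` {i..<i + dV} \<subseteq> E" using rE by auto
    qed
    then show ?thesis unfolding hg_has_cycle_def by blast
  next
    case False
    obtain i where i: "EE i = EE (i + dE)" using dEr repE_def by blast
    have "dE \<noteq> 1" using i nbE by auto
    then have d2: "dE \<ge> 2" using dEr repE_def by auto
    define p where "p = Suc i"
    define q where "q = Suc (i + dE)"
    define W where "W k = (if k = q then VV p else VV k)" for k
    have pq: "Suc p < q" using d2 p_def q_def by simp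
    have cl: "W p = W q" using W_def pq by simp
    have "hg_cycle V E inc (map W [p..<Suc q]) (map EE [p..<q])"
    proof (rule cycle_from_seq[OF pq cl])
      show "inj_on W {p..<q}"
      proof (rule linorder_inj_onI')
        fix m n assume "m \<in> {p..<q}" "n \<in> {p..<q}" "m < n"
        then show "W m \<noteq> W n" using noV[of m n] False W_def p_def q_def by auto
      qed
      show "inj_on W {Suc p..q}"
      proof (rule linorder_inj_onI')
        fix m n assume mn: "m \<in> {Suc p..q}" "n \<in> {Suc p..q}" "m < n"
        show "W m \<noteq> W n"
        proof (cases "n = q")
          case True
          then have "W n = VV p" "W m = VV m" using W_def mn by auto
          moreover have "VV p \<noteq> VV m" using noV[of p m] mn False p_def q_def by auto
          ultimately show ?thesis by simp
        next
          case nq: False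
          then have "W n = VV n" "W m = VV m" using W_def mn by auto
          moreover have "VV m \<noteq> VV n" using noV[of m n] mn False p_def q_def by auto
          ultimately show ?thesis by simp
        qed
      qed
      show "inj_on EE {p..<q}"
      proof (rule linorder_inj_onI')
        fix m n assume "m \<in> {p..<q}" "n \<in> {p..<q}" "m < n"
        then show "EE m \<noteq> EE n" using noE[of m n] p_def q_def by auto
      qed
      show "\<forall>k\<in>{p..<q}. inc (W k) (EE k) \<and> inc (W (Suc k)) (EE k)"
      proof
        fix k assume k: "k \<in> {p..<q}"
        have a1: "inc (W k) (EE k)" using k W_def inc by auto
        have a2: "inc (W (Suc k)) (EE k)"
        proof (cases "Suc k = q")
          case True
          then have "k = i + dE" using q_def by simp
          then have "EE k = EE i" using i by simp
          moreover have "W (Suc k) = VV (Suc i)" using True W_def p_def by simp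
          ultimately show ?thesis using inc[of i] by simp
        next
          case False then show ?thesis using W_def inc by simp
        qed
        show "inc (W k) (EE k) \<and> inc (W (Suc k)) (EE k)" using a1 a2 by simp
      qed
      show "W ` {p..q} \<subseteq> V" using rV W_def by auto
      show "EE ` {p..<q} \<subseteq> E" using rE by auto
    qed
    then show ?thesis unfolding hg_has_cycle_def by blast
  qed
qed

lemma card3_contra:
  assumes "finite S" "card S \<le> 2" "x \<in> S" "y \<in> S" "z \<in> S" "x \<noteq> y" "x \<noteq> z" "y \<noteq> z"
  shows False
proof -
  have "{x, y, z} \<subseteq> S" using assms by auto
  then have "card {x, y, z} \<le> card S" using assms(1) by (rule card_mono[rotated])
  moreover have "card {x, y, z} = 3" using assms by simp
  ultimately show False using assms(2) by simp
qed

lemma leaf_exists: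
  assumes fin: "finite B" and fs0: "fpf_involution B s0" and fs1: "fpf_involution B s1"
    and fs2: "fpf_involution B s2" and ne: "B \<noteq> {}"
    and card2: "\<forall>v\<in>orbit_of {s1, s2} ` B. \<forall>e\<in>orbit_of {s0, s2} ` B. card (v \<inter> e) \<le> 2"
    and nocyc: "\<not> hg_has_cycle (orbit_of {s1, s2} ` B) (orbit_of {s0, s2} ` B) hm_inc"
  shows "\<exists>x\<in>B. s1 x = s2 x \<or> s0 x = s2 x"
proof (rule ccontr)
  assume "\<not> (\<exists>x\<in>B. s1 x = s2 x \<or> s0 x = s2 x)"
  then have nl: "\<And>x. x \<in> B \<Longrightarrow> s1 x \<noteq> s2 x \<and> s0 x \<noteq> s2 x" by blast
  obtain x0 where x0: "x0 \<in> B" using ne by auto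
  define X where "X k = ((s0 \<circ> s1)^^k) x0" for k
  define Y where "Y k = s1 (X k)" for k
  have XS: "X (Suc k) = s0 (Y k)" for k by (simp add: X_def Y_def)
  have XB: "X k \<in> B" for k
    by (induction k) (use x0 fpfD(1)[OF fs0] fpfD(1)[OF fs1] in \<open>simp_all add: X_def\<close>)
  have YB: "Y k \<in> B" for k using XB fpfD(1)[OF fs1] Y_def by simp
  define VV where "VV k = orbit_of {s1, s2} (X k)" for k
  define EE where "EE k = orbit_of {s0, s2} (Y k)" for k
  have m1: "Y k \<in> VV k" for k
    using stepI[of s1 "{s1,s2}" "X k" "Y k"] Y_def VV_def by (simp add: orbit_of_def)
  have m2: "s2 (Y k) \<in> VV k" for k
    using step_rtr2[of s1 "{s1,s2}" s2 "s2 (Y k)" "X k"] Y_def VV_def by (simp add: orbit_of_def)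
  have m3: "Y k \<in> EE k" for k unfolding EE_def by (rule orbit_self)
  have m4: "s2 (Y k) \<in> EE k" for k
    using stepI[of s2 "{s0,s2}" "Y k" "s2 (Y k)"] EE_def by (simp add: orbit_of_def)
  have m5: "X (Suc k) \<in> EE k" for k
    using stepI[of s0 "{s0,s2}" "Y k" "X (Suc k)"] EE_def XS by (simp add: orbit_of_def)
  have m6: "s2 (X (Suc k)) \<in> EE k" for k
    using step_rtr2[of s0 "{s0,s2}" s2 "s2 (X (Suc k))" "Y k"] EE_def XS by (simp add: orbit_of_def)
  have m7: "X k \<in> VV k" for k unfolding VV_def by (rule orbit_self)
  have m8: "s2 (X k) \<in> VV k" for k
    using stepI[of s2 "{s1,s2}" "X k" "s2 (X k)"] VV_def by (simp add: orbit_of_def)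
  have fV: "finite (orbit_of {s1, s2} ` B)" using fin by simp
  have fE: "finite (orbit_of {s0, s2} ` B)" using fin by simp
  have VVB: "VV k \<in> orbit_of {s1, s2} ` B" for k using XB VV_def by simp
  have EEB: "EE k \<in> orbit_of {s0, s2} ` B" for k using YB EE_def by simp
  have cl1: "\<forall>z\<in>B. \<forall>g\<in>{s1,s2}. g z \<in> B" using inv_closed[of "{s1,s2}" B] fs1 fs2 by simp
  have finI: "finite (VV k \<inter> EE j)" for k j
  proof -
    have "VV k \<subseteq> B" using orbit_sub[OF XB cl1] VV_def by simp
    then have "finite (VV k)" using fin by (rule finite_subset)
    then show ?thesis by simp
  qed
  have c2: "card (VV k \<inter> EE j) \<le> 2" for k j
  proof -
    have "VV k \<in> orbit_of {s1, s2} ` B" by (rule VVB)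
    moreover have "EE j \<in> orbit_of {s0, s2} ` B" by (rule EEB)
    ultimately show ?thesis using card2 by (simp only: Ball_def)
  qed
  have nbV: "VV k \<noteq> VV (Suc k)" for k
  proof
    assume eq: "VV k = VV (Suc k)"
    have A: "Y k \<in> VV k \<inter> EE k" "s2 (Y k) \<in> VV k \<inter> EE k" "X (Suc k) \<in> VV k \<inter> EE k"
      using m1[of k] m2[of k] m3[of k] m4[of k] m5[of k] m7[of "Suc k"] eq by auto
    have D1: "Y k \<noteq> s2 (Y k)" using fpfD(3)[OF fs2 YB[of k]] by auto
    have D2: "Y k \<noteq> X (Suc k)" using fpfD(3)[OF fs0 YB[of k]] XS[of k] by auto
    have D3: "s2 (Y k) \<noteq> X (Suc k)" using nl[OF YB[of k]] XS[of k] by auto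
    from card3_contra[OF finI[of k k] c2[of k k] A D1 D2 D3] show False .
  qed
  have nbE: "EE k \<noteq> EE (Suc k)" for k
  proof
    assume eq: "EE k = EE (Suc k)"
    have A: "X (Suc k) \<in> VV (Suc k) \<inter> EE k" "s2 (X (Suc k)) \<in> VV (Suc k) \<inter> EE k"
      "Y (Suc k) \<in> VV (Suc k) \<inter> EE k"
      using m1[of "Suc k"] m3[of "Suc k"] m5[of k] m6[of k] m7[of "Suc k"] m8[of "Suc k"] eq by auto
    have D1: "X (Suc k) \<noteq> s2 (X (Suc k))" using fpfD(3)[OF fs2 XB[of "Suc k"]] by auto
    have D2: "X (Suc k) \<noteq> Y (Suc k)" using fpfD(3)[OF fs1 XB[of "Suc k"]] Y_def[of "Suc k"] by auto
    have D3: "s2 (X (Suc k)) \<noteq> Y (Suc k)" using nl[OF XB[of "Suc k"]] Y_def[of "Suc k"] by auto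
    from card3_contra[OF finI[of "Suc k" k] c2[of "Suc k" k] A D1 D2 D3] show False .
  qed
  have inc: "hm_inc (VV k) (EE k) \<and> hm_inc (VV (Suc k)) (EE k)" for k
    using m1[of k] m3[of k] m5[of k] m7[of "Suc k"] unfolding hm_inc_def by auto
  have "hg_has_cycle (orbit_of {s1, s2} ` B) (orbit_of {s0, s2} ` B) hm_inc"
    by (rule walk_cycle[where VV=VV and EE=EE and inc=hm_inc, OF fV fE VVB EEB inc nbV nbE])
  then show False using nocyc by simp
qed

definition TT :: "('b \<Rightarrow> 'b) \<Rightarrow> ('b \<Rightarrow> 'b) \<Rightarrow> ('b \<Rightarrow> 'b) \<Rightarrow> 'b set \<Rightarrow> 'b \<Rightarrow> 'b" where
  "TT s0 s1 s2 U x = (if s1 (s2 x) \<in> U then s2 (s0 (s1 (s2 x))) else s1 (s2 x))"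

definition PP :: "('b \<Rightarrow> 'b) \<Rightarrow> ('b \<Rightarrow> 'b) \<Rightarrow> 'b set \<Rightarrow> 'b \<Rightarrow> 'b" where
  "PP s0 s2 U x = (if x \<in> U then s0 (s2 x) else s2 (s0 x))"

lemma TT_perm:
  assumes f0: "fpf_involution B s0" and f1: "fpf_involution B s1" and f2: "fpf_involution B s2"
    and U: "U \<subseteq> B" "\<forall>x\<in>U. s0 x \<in> U \<and> s2 x \<in> U"
  shows "\<forall>x\<in>B. TT s0 s1 s2 U x \<in> B" "inj_on (TT s0 s1 s2 U) B"
proof -
  note F0 = fpfD[OF f0] and F1 = fpfD[OF f1] and F2 = fpfD[OF f2]
  show "\<forall>x\<in>B. TT s0 s1 s2 U x \<in> B" unfolding TT_def using F0(1) F1(1) F2(1) by simp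
  show "inj_on (TT s0 s1 s2 U) B"
  proof (rule inj_onI)
    fix x y assume x: "x \<in> B" and y: "y \<in> B" and eq: "TT s0 s1 s2 U x = TT s0 s1 s2 U y"
    define u where "u = s1 (s2 x)"
    define v where "v = s1 (s2 y)"
    have uB: "u \<in> B" and vB: "v \<in> B" using F1(1) F2(1) x y u_def v_def by auto
    have "u = v"
    proof (cases "u \<in> U")
      case True
      note uU = True
      show ?thesis
      proof (cases "v \<in> U")
        case True
        then have "s2 (s0 u) = s2 (s0 v)" using eq uU unfolding TT_def u_def v_def by simp
        then have "s2 (s2 (s0 u)) = s2 (s2 (s0 v))" by simp
        then have "s0 u = s0 v" using F2(2) F0(1) uB vB by simp
        then have "s0 (s0 u) = s0 (s0 v)" by simp
        then show ?thesis using F0(2) uB vB by simp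
      next
        case False
        then have "s2 (s0 u) = v" using eq uU unfolding TT_def u_def v_def by simp
        moreover have "s2 (s0 u) \<in> U" using U(2) uU by simp
        ultimately show ?thesis using False by simp
      qed
    next
      case False
      note uU = False
      show ?thesis
      proof (cases "v \<in> U")
        case True
        then have "u = s2 (s0 v)" using eq uU unfolding TT_def u_def v_def by simp
        moreover have "s2 (s0 v) \<in> U" using U(2) True by simp
        ultimately show ?thesis using uU by simp
      next
        case False
        then show ?thesis using eq uU unfolding TT_def u_def v_def by simp
      qed
    qed
    then have "s2 (s1 u) = s2 (s1 v)" by simp
    then show "x = y" using u_def v_def F1(2) F2(2) F2(1) x y by simp
  qed
qed

lemma PP_perm:
  assumes f0: "fpf_involution B s0" and f2: "fpf_involution B s2"
    and U: "U \<subseteq> B" "\<forall>x\<in>U. s0 x \<in> U \<and> s2 x \<in> U"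
  shows "\<forall>x\<in>B. PP s0 s2 U x \<in> B" "inj_on (PP s0 s2 U) B"
proof -
  note F0 = fpfD[OF f0] and F2 = fpfD[OF f2]
  show "\<forall>x\<in>B. PP s0 s2 U x \<in> B" unfolding PP_def using F0(1) F2(1) by simp
  have bk2: "x \<in> B \<Longrightarrow> (if PP s0 s2 U x \<in> U then s2 (s0 (PP s0 s2 U x)) else s0 (s2 (PP s0 s2 U x))) = x" for x
  proof -
    assume x: "x \<in> B"
    show ?thesis
    proof (cases "x \<in> U")
      case True
      then have "PP s0 s2 U x \<in> U" unfolding PP_def using U(2) by simp
      then show ?thesis using True F0 F2 x unfolding PP_def by simp
    next
      case False
      have "s2 (s0 x) \<notin> U"
      proof
        assume "s2 (s0 x) \<in> U"
        then have "s0 (s2 (s2 (s0 x))) \<in> U" using U(2) by simp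
        then show False using False F0 F2 x by simp
      qed
      then show ?thesis using False F0 F2 x unfolding PP_def by simp
    qed
  qed
  show "inj_on (PP s0 s2 U) B"
    by (rule inj_on_inverseI[where g="\<lambda>y. if y \<in> U then s2 (s0 y) else s0 (s2 y)"]) (use bk2 in simp)
qed

lemma perm_contract:
  assumes sub: "B' \<subseteq> B" and cl: "\<forall>z\<in>B. f z \<in> B"
    and fwd: "\<forall>z\<in>B'. f' z \<in> B' \<and> (z, f' z) \<in> (gen_rel {f})\<^sup>*"
    and hB: "\<forall>z\<in>B. h z \<in> B'" and hid: "\<forall>z\<in>B'. h z = z"
    and hstep: "\<forall>z\<in>B. (h z, h (f z)) \<in> (gen_rel {f'})\<^sup>*"
  shows "\<forall>x\<in>B'. orbit_of {f'} x = orbit_of {f} x \<inter> B'"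
proof
  fix x assume x: "x \<in> B'"
  show "orbit_of {f'} x = orbit_of {f} x \<inter> B'"
    by (rule contract_orbit[OF sub _ _ hB hid _ x]) (use cl fwd hstep in simp_all)
qed

lemma perm_count:
  assumes fin: "finite B" and sub: "B' \<subseteq> B" and cl: "\<forall>z\<in>B. f z \<in> B" and inj: "inj_on f B"
    and eq: "\<forall>x\<in>B'. orbit_of {f'} x = orbit_of {f} x \<inter> B'"
  shows "num_cycles B f = num_cycles B' f' + card {Q \<in> orbit_of {f} ` B. Q \<inter> B' = {}}"
  unfolding num_cycles_def
  by (rule count_orbits[OF fin sub _ _ eq]) (use cl perm_back[OF fin cl inj] in simp_all)

lemma nc_cong:
  assumes cl: "\<forall>z\<in>B. f z \<in> B" and eq: "\<forall>z\<in>B. g z = f z"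
  shows "num_cycles B g = num_cycles B f"
proof -
  have E: "\<forall>x\<in>B. orbit_of {g} x = orbit_of {f} x \<inter> B"
  proof (rule perm_contract[where h=id])
    show "\<forall>z\<in>B. g z \<in> B \<and> (z, g z) \<in> (gen_rel {f})\<^sup>*"
      using cl eq step_rtr[of f "{f}"] by simp
    show "\<forall>z\<in>B. (id z, id (f z)) \<in> (gen_rel {g})\<^sup>*"
    proof
      fix z assume "z \<in> B"
      then have "g z = f z" using eq by simp
      then show "(id z, id (f z)) \<in> (gen_rel {g})\<^sup>*" using step_rtr[of g "{g}" z] by simp
    qed
    show "B \<subseteq> B" by simp
    show "\<forall>z\<in>B. f z \<in> B" by (rule cl)
    show "\<forall>z\<in>B. id z \<in> B" by simp
    show "\<forall>z\<in>B. id z = z" by simp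
  qed
  have S: "orbit_of {f} x \<subseteq> B" if "x \<in> B" for x using orbit_sub[of x B "{f}"] cl that by simp
  have "orbit_of {g} x = orbit_of {f} x" if "x \<in> B" for x
  proof -
    have "orbit_of {g} x = orbit_of {f} x \<inter> B" using E that by simp
    also have "\<dots> = orbit_of {f} x" using S[OF that] by (rule Int_absorb2)
    finally show ?thesis .
  qed
  then have "orbit_of {g} ` B = orbit_of {f} ` B" by (rule image_cong[OF refl])
  then show ?thesis unfolding num_cycles_def num_orbits_def by simp
qed

lemma count_zero:
  assumes "B' = B - {b, c}" "\<exists>y\<in>orbit_of G b. y \<in> B'" "\<exists>y\<in>orbit_of G c. y \<in> B'"
  shows "card {Q \<in> orbit_of G ` B. Q \<inter> B' = {}} = 0"
proof -
  have "orbit_of G x \<inter> B' \<noteq> {}" if "x \<in> B" for x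
  proof (cases "x = b \<or> x = c")
    case True then show ?thesis using assms by auto
  next
    case False then show ?thesis using that assms orbit_self[of x G] by auto
  qed
  then have "{Q \<in> orbit_of G ` B. Q \<inter> B' = {}} = {}" by (auto simp del: Int_insert_left)
  then show ?thesis by (simp only: card.empty)
qed

lemma count_two:
  assumes "B' = B - {b, c}" "b \<in> B" "c \<in> B" "b \<noteq> c" "f b = b" "f c = c"
  shows "card {Q \<in> orbit_of {f} ` B. Q \<inter> B' = {}} = 2"
proof -
  have "orbit_of {f} x \<inter> B' \<noteq> {}" if "x \<in> B" "x \<noteq> b" "x \<noteq> c" for x
    using that assms orbit_self[of x "{f}"] by auto
  then have "{Q \<in> orbit_of {f} ` B. Q \<inter> B' = {}} = {{b}, {c}}"
    using fixed_orbit[of f b] fixed_orbit[of f c] assms by auto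
  then show ?thesis using assms by simp
qed

lemma orb_step: "(b, f b) \<in> (gen_rel {f})\<^sup>*"
  using step_rtr[of f "{f}" b] by simp

lemma orb_mem: "f b \<in> orbit_of {f} b"
  using orb_step[of b f] by (simp add: orbit_of_def)

lemma orb_step2: "y = f (f b) \<Longrightarrow> (b, y) \<in> (gen_rel {f})\<^sup>*"
  using step_rtr2[of f "{f}" f y b] by simp

context leafrm
begin

lemma B'I: "x \<in> B \<Longrightarrow> x \<noteq> b \<Longrightarrow> x \<noteq> c \<Longrightarrow> x \<in> B'"
  using B'_mem by simp

lemma r2a_B': "r2 a \<in> B'" and r2d_B': "r2 d \<in> B'"
  using B'I facts by auto

lemma tau_B': "x \<in> B' \<Longrightarrow> q (r2 x) \<in> B'"
proof -
  assume x: "x \<in> B'"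
  then have xB: "x \<in> B" "x \<noteq> b" "x \<noteq> c" using B'_mem by auto
  have r: "r2 x \<in> B" "r2 x \<noteq> b" "r2 x \<noteq> c" using fpfD(1)[OF fr xB(1)] r2_notbc[OF xB] by auto
  show ?thesis using fpfD(1)[OF fq r(1)] q_notbc[OF r] B'_mem by simp
qed

lemma LA_T:
  assumes U: "U \<subseteq> B" "\<forall>x\<in>U. p x \<in> U \<and> r2 x \<in> U"
  shows "num_cycles B (TT p q r2 U) = num_cycles B' (TT p' q r2 (U - {b, c})) + (if b \<in> U then 0 else 2)"
proof -
  define T where "T = TT p q r2 U"
  define T' where "T' = TT p' q r2 (U - {b, c})"
  have Tp: "\<forall>x\<in>B. T x \<in> B" "inj_on T B" using TT_perm[OF fp fq fr U] T_def by auto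
  have cU: "c \<in> U \<longleftrightarrow> b \<in> U" using U f1(4,11) bB by metis
  have aU: "a \<in> U \<longleftrightarrow> b \<in> U" using U f1(9) a_def bB f1(5) by metis
  have dU: "d \<in> U \<longleftrightarrow> b \<in> U" using U f1(10) d_def cU f1(6) f1(1) by metis
  have tb: "q (r2 b) = b" and tc: "q (r2 c) = c" using f1 qb by auto
  have pU: "p y \<notin> {b, c}" if "y \<in> U" "b \<notin> U" for y using U that cU by auto
  show ?thesis
  proof (cases "b \<in> U")
    case False
    have eqT: "T' x = T x \<and> T x \<in> B'" if x: "x \<in> B'" for x
    proof -
      define y where "y = q (r2 x)"
      have y: "y \<in> B'" using tau_B'[OF x] y_def by simp
      then have yB: "y \<in> B" "y \<noteq> b" "y \<noteq> c" using B'_mem by auto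
      show ?thesis
      proof (cases "y \<in> U")
        case True
        have "y \<noteq> a" "y \<noteq> d" using True aU dU False by auto
        then have "p' y = p y" by (rule p'_simps(3))
        moreover have "p y \<in> B" "p y \<noteq> b" "p y \<noteq> c" using fpfD(1)[OF fp yB(1)] pU[OF True False] by auto
        moreover have "r2 (p y) \<noteq> b \<and> r2 (p y) \<noteq> c" using r2_notbc calculation(2-4) by blast
        moreover have "r2 (p y) \<in> B" using fpfD(1)[OF fr] calculation(2) by blast
        ultimately show ?thesis using True yB unfolding T_def T'_def TT_def y_def[symmetric]
          using B'_mem by simp
      next
        case False
        then show ?thesis using y unfolding T_def T'_def TT_def y_def[symmetric] by simp
      qed
    qed
    have Tb: "T b = b" and Tc: "T c = c" using tb tc False cU unfolding T_def TT_def by auto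
    have eq: "\<forall>x\<in>B'. orbit_of {T'} x = orbit_of {T} x \<inter> B'"
    proof (rule perm_contract[OF B'_sub Tp(1), where h="\<lambda>z. if z = b \<or> z = c then a else z"])
      show "\<forall>z\<in>B'. T' z \<in> B' \<and> (z, T' z) \<in> (gen_rel {T})\<^sup>*" using eqT orb_step by metis
      show "\<forall>z\<in>B. (if z = b \<or> z = c then a else z) \<in> B'" using aB' B'_mem by simp
      show "\<forall>z\<in>B'. (if z = b \<or> z = c then a else z) = z" using B'_mem by simp
      show "\<forall>z\<in>B. ((if z = b \<or> z = c then a else z), (if T z = b \<or> T z = c then a else T z)) \<in> (gen_rel {T'})\<^sup>*"
      proof
        fix z assume z: "z \<in> B"
        show "((if z = b \<or> z = c then a else z), (if T z = b \<or> T z = c then a else T z)) \<in> (gen_rel {T'})\<^sup>*"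
        proof (cases "z = b \<or> z = c")
          case True then show ?thesis using Tb Tc by auto
        next
          case nz: False
          then have zB': "z \<in> B'" using z B'_mem by simp
          then have "T' z = T z" "T z \<in> B'" using eqT by auto
          then show ?thesis using nz B'_mem orb_step[of z T'] by simp
        qed
      qed
    qed
    have "num_cycles B T = num_cycles B' T' + card {Q \<in> orbit_of {T} ` B. Q \<inter> B' = {}}"
      by (rule perm_count[OF fin B'_sub Tp eq])
    moreover have "card {Q \<in> orbit_of {T} ` B. Q \<inter> B' = {}} = 2"
      by (rule count_two[OF B'_def bB f1(1) f1(2) Tb Tc])
    ultimately show ?thesis using False T_def T'_def by simp
  next
    case True
    have inU: "a \<in> U" "c \<in> U" "d \<in> U" using True aU cU dU by auto
    have Tb: "T b = r2 a" using tb True a_def unfolding T_def TT_def by simp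
    have Tc: "T c = r2 d" using tc inU d_def unfolding T_def TT_def by simp
    have aU': "a \<in> U - {b,c}" and dU': "d \<in> U - {b,c}" using inU facts by auto
    have eqT: "(q (r2 x) = a \<longrightarrow> T x = c \<and> T' x = r2 d) \<and> (q (r2 x) = d \<longrightarrow> T x = b \<and> T' x = r2 a)
       \<and> (q (r2 x) \<noteq> a \<and> q (r2 x) \<noteq> d \<longrightarrow> T' x = T x \<and> T x \<in> B')" if x: "x \<in> B'" for x
    proof -
      define y where "y = q (r2 x)"
      have y: "y \<in> B'" using tau_B'[OF x] y_def by simp
      then have yB: "y \<in> B" "y \<noteq> b" "y \<noteq> c" using B'_mem by auto
      have A: "y = a \<longrightarrow> T x = c \<and> T' x = r2 d"
        using inU aU' f1(9,11) p'_simps(1) unfolding T_def T'_def TT_def y_def[symmetric] by simp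
      have D: "y = d \<longrightarrow> T x = b \<and> T' x = r2 a"
        using inU dU' f1(10,4) p'_simps(2) unfolding T_def T'_def TT_def y_def[symmetric] by simp
      have O: "y \<noteq> a \<and> y \<noteq> d \<longrightarrow> T' x = T x \<and> T x \<in> B'"
      proof
        assume ne: "y \<noteq> a \<and> y \<noteq> d"
        show "T' x = T x \<and> T x \<in> B'"
        proof (cases "y \<in> U")
          case True
          have "p' y = p y" using ne p'_simps(3) by simp
          moreover have "p y \<in> B" "p y \<noteq> b" "p y \<noteq> c" using fpfD(1)[OF fp yB(1)] p_notbc[OF yB(1)] ne by auto
          moreover have "r2 (p y) \<noteq> b \<and> r2 (p y) \<noteq> c" using r2_notbc calculation(2-4) by blast
          moreover have "r2 (p y) \<in> B" using fpfD(1)[OF fr] calculation(2) by blast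
          ultimately show ?thesis using True yB unfolding T_def T'_def TT_def y_def[symmetric]
            using B'_mem by simp
        next
          case False
          then show ?thesis using y unfolding T_def T'_def TT_def y_def[symmetric] by simp
        qed
      qed
      show ?thesis using A D O y_def by simp
    qed
    define h where "h z = (if z = b then r2 a else if z = c then r2 d else z)" for z
    have eq: "\<forall>x\<in>B'. orbit_of {T'} x = orbit_of {T} x \<inter> B'"
    proof (rule perm_contract[OF B'_sub Tp(1), where h=h])
      show "\<forall>z\<in>B'. T' z \<in> B' \<and> (z, T' z) \<in> (gen_rel {T})\<^sup>*"
      proof
        fix z assume z: "z \<in> B'"
        show "T' z \<in> B' \<and> (z, T' z) \<in> (gen_rel {T})\<^sup>*"
        proof (cases "q (r2 z) = a")
          case True
          then have "T z = c" "T' z = r2 d" using eqT[OF z] by auto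
          then show ?thesis using Tc r2d_B' orb_step2[of "T' z" T z] by simp
        next
          case na: False
          show ?thesis
          proof (cases "q (r2 z) = d")
            case True
            then have "T z = b" "T' z = r2 a" using eqT[OF z] by auto
            then show ?thesis using Tb r2a_B' orb_step2[of "T' z" T z] by simp
          next
            case False
            then have "T' z = T z" "T z \<in> B'" using eqT[OF z] na by auto
            then show ?thesis using orb_step[of z T] by simp
          qed
        qed
      qed
      show "\<forall>z\<in>B. h z \<in> B'" using r2a_B' r2d_B' B'_mem h_def by simp
      show "\<forall>z\<in>B'. h z = z" using B'_mem h_def by simp
      have hr2a: "h (r2 a) = r2 a" and hr2d: "h (r2 d) = r2 d" using facts h_def by auto
      show "\<forall>z\<in>B. (h z, h (T z)) \<in> (gen_rel {T'})\<^sup>*"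
      proof
        fix z assume z: "z \<in> B"
        show "(h z, h (T z)) \<in> (gen_rel {T'})\<^sup>*"
        proof (cases "z = b \<or> z = c")
          case True
          then show ?thesis
          proof
            assume "z = b" then show ?thesis using Tb hr2a h_def by simp
          next
            assume "z = c" then show ?thesis using Tc hr2d h_def f1(2) by simp
          qed
        next
          case nz: False
          then have zB': "z \<in> B'" using z B'_mem by simp
          have hz: "h z = z" using nz h_def by simp
          show ?thesis
          proof (cases "q (r2 z) = a")
            case True
            then have "T z = c" "T' z = r2 d" using eqT[OF zB'] by auto
            then show ?thesis using hz h_def f1(2) orb_step[of z T'] by simp
          next
            case na: False
            show ?thesis
            proof (cases "q (r2 z) = d")
              case True
              then have "T z = b" "T' z = r2 a" using eqT[OF zB'] by auto
              then show ?thesis using hz h_def orb_step[of z T'] by simp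
            next
              case False
              then have "T' z = T z" "T z \<in> B'" using eqT[OF zB'] na by auto
              then show ?thesis using hz h_def B'_mem orb_step[of z T'] by simp
            qed
          qed
        qed
      qed
    qed
    have "num_cycles B T = num_cycles B' T' + card {Q \<in> orbit_of {T} ` B. Q \<inter> B' = {}}"
      by (rule perm_count[OF fin B'_sub Tp eq])
    moreover have "card {Q \<in> orbit_of {T} ` B. Q \<inter> B' = {}} = 0"
      by (rule count_zero[OF B'_def]) (use orb_mem[of T b] orb_mem[of T c] Tb Tc r2a_B' r2d_B' in auto)
    ultimately show ?thesis using True T_def T'_def by simp
  qed
qed

lemma LA_P:
  assumes U: "U \<subseteq> B" "\<forall>x\<in>U. p x \<in> U \<and> r2 x \<in> U"
  shows "num_cycles B (PP p r2 U) = num_cycles B' (PP p' r2 (U - {b, c}))"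
proof -
  define P where "P = PP p r2 U"
  define P' where "P' = PP p' r2 (U - {b, c})"
  have Pp: "\<forall>x\<in>B. P x \<in> B" "inj_on P B" using PP_perm[OF fp fr U] P_def by auto
  have cU: "c \<in> U \<longleftrightarrow> b \<in> U" using U f1(4,11) bB by metis
  have aU: "a \<in> U \<longleftrightarrow> b \<in> U" using U f1(9) a_def bB f1(5) by metis
  have dU: "d \<in> U \<longleftrightarrow> b \<in> U" using U f1(10) d_def cU f1(6) f1(1) by metis
  have r2x: "r2 x \<in> B" "r2 x \<noteq> b" "r2 x \<noteq> c" if "x \<in> B'" for x
    using that B'_mem fpfD(1)[OF fr] r2_notbc by auto
  show ?thesis
  proof (cases "b \<in> U")
    case False
    have nU: "a \<notin> U" "b \<notin> U" "c \<notin> U" "d \<notin> U" using False aU cU dU by auto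
    have Pb: "P b = r2 a" "P c = r2 d" "P a = c" "P d = b"
      using nU a_def d_def f1(9,10,11,4) unfolding P_def PP_def by auto
    have P'ad: "P' a = r2 d" "P' d = r2 a" using nU p'_simps(1,2) unfolding P'_def PP_def by auto
    have eqP: "P' x = P x \<and> P x \<in> B'" if x: "x \<in> B'" "x \<noteq> a" "x \<noteq> d" for x
    proof (cases "x \<in> U")
      case True
      have rx: "r2 x \<in> U" using U True by simp
      then have "r2 x \<noteq> a" "r2 x \<noteq> d" using nU by auto
      then have "p' (r2 x) = p (r2 x)" by (rule p'_simps(3))
      moreover have "p (r2 x) \<in> U" using U rx by simp
      ultimately show ?thesis using True x(1) nU B'_mem U unfolding P_def P'_def PP_def by auto
    next
      case False
      have xB: "x \<in> B" using x B'_mem by simp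
      have "p' x = p x" using x p'_simps(3) by simp
      moreover have "p x \<in> B" "p x \<noteq> b" "p x \<noteq> c" using fpfD(1)[OF fp xB] p_notbc[OF xB x(2,3)] by auto
      moreover have "r2 (p x) \<noteq> b \<and> r2 (p x) \<noteq> c" using r2_notbc calculation(2-4) by blast
      moreover have "r2 (p x) \<in> B" using fpfD(1)[OF fr] calculation(2) by blast
      ultimately show ?thesis using False B'_mem unfolding P_def P'_def PP_def by simp
    qed
    define h where "h z = (if z = b then r2 a else if z = c then r2 d else z)" for z
    have hr2a: "h (r2 a) = r2 a" and hr2d: "h (r2 d) = r2 d" and ha: "h a = a" and hd: "h d = d"
      using facts h_def by auto
    have eq: "\<forall>x\<in>B'. orbit_of {P'} x = orbit_of {P} x \<inter> B'"
    proof (rule perm_contract[OF B'_sub Pp(1), where h=h])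
      show "\<forall>z\<in>B'. P' z \<in> B' \<and> (z, P' z) \<in> (gen_rel {P})\<^sup>*"
      proof
        fix z assume z: "z \<in> B'"
        show "P' z \<in> B' \<and> (z, P' z) \<in> (gen_rel {P})\<^sup>*"
        proof (cases "z = a \<or> z = d")
          case True
          then show ?thesis
          proof
            assume za: "z = a"
            then show ?thesis using Pb P'ad r2d_B' orb_step2[of "P' z" P z] by simp
          next
            assume zd: "z = d"
            then show ?thesis using Pb P'ad r2a_B' orb_step2[of "P' z" P z] by simp
          qed
        next
          case False
          then show ?thesis using eqP[OF z] orb_step[of z P] by simp
        qed
      qed
      show "\<forall>z\<in>B. h z \<in> B'" using r2a_B' r2d_B' B'_mem h_def by simp
      show "\<forall>z\<in>B'. h z = z" using B'_mem h_def by simp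
      show "\<forall>z\<in>B. (h z, h (P z)) \<in> (gen_rel {P'})\<^sup>*"
      proof
        fix z assume z: "z \<in> B"
        show "(h z, h (P z)) \<in> (gen_rel {P'})\<^sup>*"
        proof (cases "z = b \<or> z = c")
          case True
          then show ?thesis
          proof
            assume "z = b" then show ?thesis using Pb hr2a h_def by simp
          next
            assume "z = c" then show ?thesis using Pb hr2d h_def f1(2) by simp
          qed
        next
          case nz: False
          then have zB': "z \<in> B'" using z B'_mem by simp
          have hz: "h z = z" using nz h_def by simp
          show ?thesis
          proof (cases "z = a \<or> z = d")
            case True
            then show ?thesis
            proof
              assume za: "z = a"
              then show ?thesis using Pb P'ad hz h_def f1(2) orb_step[of z P'] by simp
            next
              assume zd: "z = d"
              then show ?thesis using Pb P'ad hz h_def orb_step[of z P'] by simp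
            qed
          next
            case False
            then have "P' z = P z" "P z \<in> B'" using eqP[OF zB'] by auto
            then show ?thesis using hz h_def B'_mem orb_step[of z P'] by simp
          qed
        qed
      qed
    qed
    have "num_cycles B P = num_cycles B' P' + card {Q \<in> orbit_of {P} ` B. Q \<inter> B' = {}}"
      by (rule perm_count[OF fin B'_sub Pp eq])
    moreover have "card {Q \<in> orbit_of {P} ` B. Q \<inter> B' = {}} = 0"
      by (rule count_zero[OF B'_def]) (use orb_mem[of P b] orb_mem[of P c] Pb r2a_B' r2d_B' in auto)
    ultimately show ?thesis using P_def P'_def by simp
  next
    case True
    have inU: "a \<in> U" "b \<in> U" "c \<in> U" "d \<in> U" using True aU cU dU by auto
    have r2aU: "r2 a \<in> U" "r2 d \<in> U" using inU U by auto
    have Pb: "P b = d" "P c = a" "P (r2 a) = b" "P (r2 d) = c"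
      using inU r2aU a_def d_def f1(9,10,11,4) fpfD(2)[OF fr f1(5)] fpfD(2)[OF fr f1(6)]
      unfolding P_def PP_def by auto
    have r2aU': "r2 a \<in> U - {b,c}" "r2 d \<in> U - {b,c}" using r2aU facts by auto
    have P'ad: "P' (r2 a) = d" "P' (r2 d) = a"
      using r2aU' p'_simps(1,2) fpfD(2)[OF fr f1(5)] fpfD(2)[OF fr f1(6)] unfolding P'_def PP_def by auto
    have eqP: "P' x = P x \<and> P x \<in> B'" if x: "x \<in> B'" "x \<noteq> r2 a" "x \<noteq> r2 d" for x
    proof (cases "x \<in> U")
      case True
      have xB: "x \<in> B" using x B'_mem by simp
      have rx: "r2 x \<in> B" using fpfD(1)[OF fr xB] .
      have "r2 x \<noteq> a" "r2 x \<noteq> d" using x fpfD(2)[OF fr xB] by metis+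
      then have "p' (r2 x) = p (r2 x)" "p (r2 x) \<noteq> b" "p (r2 x) \<noteq> c"
        using p'_simps(3) p_notbc[OF rx] by auto
      moreover have "p (r2 x) \<in> B" using fpfD(1)[OF fp rx] .
      ultimately show ?thesis using True x(1) B'_mem unfolding P_def P'_def PP_def by auto
    next
      case False
      have xB: "x \<in> B" using x B'_mem by simp
      have xad: "x \<noteq> a" "x \<noteq> d" using False inU by auto
      have "p' x = p x" using xad p'_simps(3) by simp
      moreover have "p x \<in> B" "p x \<noteq> b" "p x \<noteq> c" using fpfD(1)[OF fp xB] p_notbc[OF xB xad] by auto
      moreover have "r2 (p x) \<noteq> b \<and> r2 (p x) \<noteq> c" using r2_notbc calculation(2-4) by blast
      moreover have "r2 (p x) \<in> B" using fpfD(1)[OF fr] calculation(2) by blast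
      ultimately show ?thesis using False B'_mem unfolding P_def P'_def PP_def by simp
    qed
    define h where "h z = (if z = b then d else if z = c then a else z)" for z
    have ha: "h a = a" and hd: "h d = d" using facts h_def by auto
    have eq: "\<forall>x\<in>B'. orbit_of {P'} x = orbit_of {P} x \<inter> B'"
    proof (rule perm_contract[OF B'_sub Pp(1), where h=h])
      show "\<forall>z\<in>B'. P' z \<in> B' \<and> (z, P' z) \<in> (gen_rel {P})\<^sup>*"
      proof
        fix z assume z: "z \<in> B'"
        show "P' z \<in> B' \<and> (z, P' z) \<in> (gen_rel {P})\<^sup>*"
        proof (cases "z = r2 a \<or> z = r2 d")
          case True
          then show ?thesis
          proof
            assume za: "z = r2 a"
            then show ?thesis using Pb P'ad dB' orb_step2[of "P' z" P z] by simp
          next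
            assume zd: "z = r2 d"
            then show ?thesis using Pb P'ad aB' orb_step2[of "P' z" P z] by simp
          qed
        next
          case False
          then show ?thesis using eqP[OF z] orb_step[of z P] by simp
        qed
      qed
      show "\<forall>z\<in>B. h z \<in> B'" using aB' dB' B'_mem h_def by simp
      show "\<forall>z\<in>B'. h z = z" using B'_mem h_def by simp
      show "\<forall>z\<in>B. (h z, h (P z)) \<in> (gen_rel {P'})\<^sup>*"
      proof
        fix z assume z: "z \<in> B"
        show "(h z, h (P z)) \<in> (gen_rel {P'})\<^sup>*"
        proof (cases "z = b \<or> z = c")
          case True
          then show ?thesis
          proof
            assume "z = b" then show ?thesis using Pb hd h_def by simp
          next
            assume "z = c" then show ?thesis using Pb ha h_def f1(2) by simp
          qed
        next
          case nz: False
          then have zB': "z \<in> B'" using z B'_mem by simp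
          have hz: "h z = z" using nz h_def by simp
          show ?thesis
          proof (cases "z = r2 a \<or> z = r2 d")
            case True
            then show ?thesis
            proof
              assume za: "z = r2 a"
              then show ?thesis using Pb P'ad hz h_def orb_step[of z P'] by simp
            next
              assume zd: "z = r2 d"
              then show ?thesis using Pb P'ad hz h_def f1(2) orb_step[of z P'] by simp
            qed
          next
            case False
            then have "P' z = P z" "P z \<in> B'" using eqP[OF zB'] by auto
            then show ?thesis using hz h_def B'_mem orb_step[of z P'] by simp
          qed
        qed
      qed
    qed
    have "num_cycles B P = num_cycles B' P' + card {Q \<in> orbit_of {P} ` B. Q \<inter> B' = {}}"
      by (rule perm_count[OF fin B'_sub Pp eq])
    moreover have "card {Q \<in> orbit_of {P} ` B. Q \<inter> B' = {}} = 0"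
      by (rule count_zero[OF B'_def]) (use orb_mem[of P b] orb_mem[of P c] Pb aB' dB' in auto)
    ultimately show ?thesis using P_def P'_def by simp
  qed
qed

lemma LB_T:
  assumes U: "U \<subseteq> B" "\<forall>x\<in>U. q x \<in> U \<and> r2 x \<in> U"
  shows "num_cycles B (TT q p r2 U) = num_cycles B' (TT q p' r2 (U - {b, c}))"
proof -
  define T where "T = TT q p r2 U"
  define T' where "T' = TT q p' r2 (U - {b, c})"
  define psi where "psi y = (if y \<in> U then r2 (q y) else y)" for y
  have Tp: "\<forall>x\<in>B. T x \<in> B" "inj_on T B" using TT_perm[OF fq fp fr U] T_def by auto
  have Tdef: "T x = psi (p (r2 x))" for x unfolding T_def TT_def psi_def by simp
  have psib: "psi b = b" "psi c = c" using psi_def qb f1(3,4,11) by auto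
  have psiB: "psi y \<in> B \<and> psi y \<noteq> b \<and> psi y \<noteq> c" if "y \<in> B" "y \<noteq> b" "y \<noteq> c" for y
  proof (cases "y \<in> U")
    case True
    have "q y \<in> B" "q y \<noteq> b" "q y \<noteq> c" using fpfD(1)[OF fq that(1)] q_notbc[OF that] by auto
    then show ?thesis using True psi_def fpfD(1)[OF fr] r2_notbc by simp
  next
    case False then show ?thesis using that psi_def by simp
  qed
  have T'def: "T' x = psi (p' (r2 x))" if "p' (r2 x) \<noteq> b" "p' (r2 x) \<noteq> c" for x
    using that unfolding T'_def TT_def psi_def by simp
  have Tb: "T b = psi d" "T c = psi a" "T (r2 a) = b" "T (r2 d) = c"
    using Tdef psib f1(4,9,10,11) d_def a_def fpfD(2)[OF fr f1(5)] fpfD(2)[OF fr f1(6)] by auto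
  have psid: "psi d \<in> B'" "psi a \<in> B'" using psiB facts B'_mem by auto
  have e1: "p' (r2 (r2 a)) = d" using fpfD(2)[OF fr f1(5)] p'_simps(1) by simp
  have e2: "p' (r2 (r2 d)) = a" using fpfD(2)[OF fr f1(6)] p'_simps(2) by simp
  have T'ad: "T' (r2 a) = psi d" "T' (r2 d) = psi a"
    using T'def[of "r2 a"] T'def[of "r2 d"] e1 e2 f2(1) f1(8) f1(7) ac by auto
  have eqT: "T' x = T x \<and> T x \<in> B'" if x: "x \<in> B'" "x \<noteq> r2 a" "x \<noteq> r2 d" for x
  proof -
    have xB: "x \<in> B" using x B'_mem by simp
    have rx: "r2 x \<in> B" using fpfD(1)[OF fr xB] .
    have "r2 x \<noteq> a" "r2 x \<noteq> d" using x fpfD(2)[OF fr xB] by metis+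
    then have "p' (r2 x) = p (r2 x)" "p (r2 x) \<noteq> b" "p (r2 x) \<noteq> c"
      using p'_simps(3) p_notbc[OF rx] by auto
    moreover have "p (r2 x) \<in> B" using fpfD(1)[OF fp rx] .
    ultimately show ?thesis using T'def[of x] Tdef[of x] psiB[of "p (r2 x)"] B'_mem by simp
  qed
  define h where "h z = (if z = b then psi d else if z = c then psi a else z)" for z
  have hpsi: "h (psi d) = psi d" "h (psi a) = psi a" using psid h_def B'_mem by auto
  have eq: "\<forall>x\<in>B'. orbit_of {T'} x = orbit_of {T} x \<inter> B'"
  proof (rule perm_contract[OF B'_sub Tp(1), where h=h])
    show "\<forall>z\<in>B'. T' z \<in> B' \<and> (z, T' z) \<in> (gen_rel {T})\<^sup>*"
    proof
      fix z assume z: "z \<in> B'"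
      show "T' z \<in> B' \<and> (z, T' z) \<in> (gen_rel {T})\<^sup>*"
      proof (cases "z = r2 a \<or> z = r2 d")
        case True
        then show ?thesis
        proof
          assume za: "z = r2 a"
          then show ?thesis using Tb T'ad psid orb_step2[of "T' z" T z] by simp
        next
          assume zd: "z = r2 d"
          then show ?thesis using Tb T'ad psid orb_step2[of "T' z" T z] by simp
        qed
      next
        case False
        then show ?thesis using eqT[OF z] orb_step[of z T] by simp
      qed
    qed
    show "\<forall>z\<in>B. h z \<in> B'" using psid B'_mem h_def by simp
    show "\<forall>z\<in>B'. h z = z" using B'_mem h_def by simp
    show "\<forall>z\<in>B. (h z, h (T z)) \<in> (gen_rel {T'})\<^sup>*"
    proof
      fix z assume z: "z \<in> B"
      show "(h z, h (T z)) \<in> (gen_rel {T'})\<^sup>*"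
      proof (cases "z = b \<or> z = c")
        case True
        then show ?thesis
        proof
          assume "z = b" then show ?thesis using Tb hpsi h_def by simp
        next
          assume "z = c" then show ?thesis using Tb hpsi h_def f1(2) by simp
        qed
      next
        case nz: False
        then have zB': "z \<in> B'" using z B'_mem by simp
        have hz: "h z = z" using nz h_def by simp
        show ?thesis
        proof (cases "z = r2 a \<or> z = r2 d")
          case True
          then show ?thesis
          proof
            assume za: "z = r2 a"
            then show ?thesis using Tb T'ad hz h_def orb_step[of z T'] by simp
          next
            assume zd: "z = r2 d"
            then show ?thesis using Tb T'ad hz h_def f1(2) orb_step[of z T'] by simp
          qed
        next
          case False
          then have "T' z = T z" "T z \<in> B'" using eqT[OF zB'] by auto
          then show ?thesis using hz h_def B'_mem orb_step[of z T'] by simp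
        qed
      qed
    qed
  qed
  have "num_cycles B T = num_cycles B' T' + card {Q \<in> orbit_of {T} ` B. Q \<inter> B' = {}}"
    by (rule perm_count[OF fin B'_sub Tp eq])
  moreover have "card {Q \<in> orbit_of {T} ` B. Q \<inter> B' = {}} = 0"
    by (rule count_zero[OF B'_def]) (use orb_mem[of T b] orb_mem[of T c] Tb psid in auto)
  ultimately show ?thesis using T_def T'_def by simp
qed

lemma LB_P:
  assumes U: "U \<subseteq> B" "\<forall>x\<in>U. q x \<in> U \<and> r2 x \<in> U"
  shows "num_cycles B (PP q r2 U) = num_cycles B' (PP q r2 (U - {b, c})) + 2"
proof -
  define P where "P = PP q r2 U"
  define P' where "P' = PP q r2 (U - {b, c})"
  have Pp: "\<forall>x\<in>B. P x \<in> B" "inj_on P B" using PP_perm[OF fq fr U] P_def by auto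
  have Pb: "P b = b" "P c = c" using qb f1(3,4,11) unfolding P_def PP_def by auto
  have eqP: "P' x = P x \<and> P x \<in> B'" if x: "x \<in> B'" for x
  proof -
    have xB: "x \<in> B" "x \<noteq> b" "x \<noteq> c" using x B'_mem by auto
    have "P x \<noteq> b" "P x \<noteq> c"
    proof -
      have "P x \<noteq> P b" "P x \<noteq> P c" using inj_onD[OF Pp(2)] xB bB f1(1) by metis+
      then show "P x \<noteq> b" "P x \<noteq> c" using Pb by auto
    qed
    moreover have "P' x = P x" using xB unfolding P_def P'_def PP_def by simp
    ultimately show ?thesis using Pp(1) xB B'_mem by simp
  qed
  have eq: "\<forall>x\<in>B'. orbit_of {P'} x = orbit_of {P} x \<inter> B'"
  proof (rule perm_contract[OF B'_sub Pp(1), where h="\<lambda>z. if z = b \<or> z = c then a else z"])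
    show "\<forall>z\<in>B'. P' z \<in> B' \<and> (z, P' z) \<in> (gen_rel {P})\<^sup>*" using eqP orb_step by metis
    show "\<forall>z\<in>B. (if z = b \<or> z = c then a else z) \<in> B'" using aB' B'_mem by simp
    show "\<forall>z\<in>B'. (if z = b \<or> z = c then a else z) = z" using B'_mem by simp
    show "\<forall>z\<in>B. ((if z = b \<or> z = c then a else z), (if P z = b \<or> P z = c then a else P z)) \<in> (gen_rel {P'})\<^sup>*"
    proof
      fix z assume z: "z \<in> B"
      show "((if z = b \<or> z = c then a else z), (if P z = b \<or> P z = c then a else P z)) \<in> (gen_rel {P'})\<^sup>*"
      proof (cases "z = b \<or> z = c")
        case True then show ?thesis using Pb by auto
      next
        case nz: False
        then have zB': "z \<in> B'" using z B'_mem by simp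
        then have "P' z = P z" "P z \<in> B'" using eqP by auto
        then show ?thesis using nz B'_mem orb_step[of z P'] by simp
      qed
    qed
  qed
  have "num_cycles B P = num_cycles B' P' + card {Q \<in> orbit_of {P} ` B. Q \<inter> B' = {}}"
    by (rule perm_count[OF fin B'_sub Pp eq])
  moreover have "card {Q \<in> orbit_of {P} ` B. Q \<inter> B' = {}} = 2"
    by (rule count_two[OF B'_def bB f1(1) f1(2) Pb])
  ultimately show ?thesis using P_def P'_def by simp
qed

end

lemma conn_restrict:
  assumes conn: "\<forall>x\<in>B. \<forall>y\<in>B. (x, y) \<in> (gen_rel G)\<^sup>*" and sub: "B' \<subseteq> B"
    and eq: "\<forall>x\<in>B'. orbit_of G' x = orbit_of G x \<inter> B'"
  shows "\<forall>x\<in>B'. \<forall>y\<in>B'. (x, y) \<in> (gen_rel G')\<^sup>*"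
proof (intro ballI)
  fix x y assume x: "x \<in> B'" and y: "y \<in> B'"
  then have "y \<in> orbit_of G x \<inter> B'" using conn sub by (auto simp: orbit_of_def)
  then have "y \<in> orbit_of G' x" using eq x by simp
  then show "(x, y) \<in> (gen_rel G')\<^sup>*" by (simp add: orbit_of_def)
qed

lemma closed_small:
  assumes conn: "\<forall>x\<in>B. \<forall>y\<in>B. (x, y) \<in> (gen_rel G)\<^sup>*" and b: "b \<in> B" and fin: "finite B"
    and cl: "\<forall>z\<in>{b, c}. \<forall>g\<in>G. g z \<in> {b, c}"
  shows "card B \<le> 2"
proof -
  have "B \<subseteq> orbit_of G b"
  proof
    fix y assume "y \<in> B"
    then have "(b, y) \<in> (gen_rel G)\<^sup>*" using conn b by simp
    then show "y \<in> orbit_of G b" by (simp add: orbit_of_def)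
  qed
  also have "\<dots> \<subseteq> {b, c}" by (rule orbit_sub[OF _ cl]) simp
  finally have "B \<subseteq> {b, c}" .
  then have "card B \<le> card {b, c}" by (rule card_mono[rotated]) simp
  also have "\<dots> \<le> 2" by (cases "b = c") simp_all
  finally show ?thesis .
qed

lemma pair_other: "u \<in> {x0, y0} \<Longrightarrow> v \<in> {x0, y0} \<Longrightarrow> x \<in> {x0, y0} \<Longrightarrow> u \<noteq> x \<Longrightarrow> v \<noteq> x \<Longrightarrow> u = v"
  by auto

lemma base_case:
  assumes f0: "fpf_involution B s0" and f1: "fpf_involution B s1" and f2: "fpf_involution B s2"
    and B: "B = {x0, s2 x0}" and x0: "x0 \<in> B"
  shows "\<forall>x\<in>B. TT s0 s1 s2 U x = x" "\<forall>x\<in>B. PP s0 s2 U x = x"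
proof -
  have oth: "g x = s2 x" if "x \<in> B" "fpf_involution B g" for x g
  proof -
    have "g x \<in> B" "g x \<noteq> x" using fpfD(1,3)[OF that(2,1)] by auto
    moreover have "s2 x \<in> B" "s2 x \<noteq> x" using fpfD(1,3)[OF f2 that(1)] by auto
    ultimately show ?thesis using pair_other[of "g x" x0 "s2 x0" "s2 x" x] B that(1) by simp
  qed
  show "\<forall>x\<in>B. TT s0 s1 s2 U x = x"
  proof
    fix x assume x: "x \<in> B"
    have s2x: "s2 x \<in> B" using fpfD(1)[OF f2 x] .
    have "s1 (s2 x) = s2 (s2 x)" using oth[OF s2x f1] .
    then have e1: "s1 (s2 x) = x" using fpfD(2)[OF f2 x] by simp
    have "s2 (s0 x) = s2 (s2 x)" using oth[OF x f0] by simp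
    then have e2: "s2 (s0 x) = x" using fpfD(2)[OF f2 x] by simp
    show "TT s0 s1 s2 U x = x" unfolding TT_def using e1 e2 by simp
  qed
  show "\<forall>x\<in>B. PP s0 s2 U x = x"
  proof
    fix x assume x: "x \<in> B"
    have s2x: "s2 x \<in> B" using fpfD(1)[OF f2 x] .
    have "s0 (s2 x) = s2 (s2 x)" using oth[OF s2x f0] .
    then have e1: "s0 (s2 x) = x" using fpfD(2)[OF f2 x] by simp
    have "s2 (s0 x) = s2 (s2 x)" using oth[OF x f0] by simp
    then have e2: "s2 (s0 x) = x" using fpfD(2)[OF f2 x] by simp
    show "PP s0 s2 U x = x" unfolding PP_def using e1 e2 by simp
  qed
qed

lemma card_B'_lemma:
  assumes "finite B" "b \<in> B" "c \<in> B" "b \<noteq> c"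
  shows "card (B - {b, c}) + 2 = card B"
proof -
  have "card (B - {b, c}) = card B - card {b, c}" using assms by (simp add: card_Diff_subset)
  moreover have "card {b, c} = 2" using assms by simp
  moreover have "card {b, c} \<le> card B" using assms(2,3) by (intro card_mono[OF assms(1)]) auto
  ultimately show ?thesis by simp
qed

lemma main_ind:
  assumes "finite B" "fpf_involution B s0" "fpf_involution B s1" "fpf_involution B s2" "B \<noteq> {}"
    "\<forall>x\<in>B. \<forall>y\<in>B. (x, y) \<in> (gen_rel {s0, s1, s2})\<^sup>*"
    "\<forall>v\<in>orbit_of {s1, s2} ` B. \<forall>e\<in>orbit_of {s0, s2} ` B. card (v \<inter> e) \<le> 2"
    "\<not> hg_has_cycle (orbit_of {s1, s2} ` B) (orbit_of {s0, s2} ` B) hm_inc"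
    "U \<subseteq> B" "\<forall>x\<in>U. s0 x \<in> U \<and> s2 x \<in> U"
  shows "even (num_cycles B (TT s0 s1 s2 U)) \<and> even (num_cycles B (PP s0 s2 U))
    \<and> even (num_cycles B (TT s0 s1 s2 (B - U)))
    \<and> num_cycles B (TT s0 s1 s2 U) + num_cycles B (PP s0 s2 U) + num_cycles B (TT s0 s1 s2 (B - U))
      = card B + 4"
  using assms
proof (induction "card B" arbitrary: B s0 s1 s2 U rule: less_induct)
  case less
  note fin = less.prems(1) and f0 = less.prems(2) and f1 = less.prems(3) and f2 = less.prems(4)
    and ne = less.prems(5) and conn = less.prems(6) and card2 = less.prems(7) and nocyc = less.prems(8)
    and U = less.prems(9,10)
  obtain x0 where x0: "x0 \<in> B" using ne by auto
  show ?case
  proof (cases "card B \<le> 2")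
    case True
    have sx0: "s2 x0 \<in> B" "s2 x0 \<noteq> x0" using fpfD(1,3)[OF f2 x0] by auto
    have sub: "{x0, s2 x0} \<subseteq> B" using x0 sx0 by simp
    have c2: "card {x0, s2 x0} = 2" using sx0 by simp
    then have "card B = 2" using True card_mono[OF fin sub] by simp
    then have Beq: "B = {x0, s2 x0}" using card_subset_eq[OF fin sub] c2 by simp
    have T1: "\<forall>x\<in>B. TT s0 s1 s2 U x = x" and P1: "\<forall>x\<in>B. PP s0 s2 U x = x"
      using base_case[OF f0 f1 f2 Beq x0] by auto
    have T2: "\<forall>x\<in>B. TT s0 s1 s2 (B - U) x = x"
      using base_case[OF f0 f1 f2 Beq x0] by auto
    show ?thesis using nc_id[OF T1] nc_id[OF P1] nc_id[OF T2] \<open>card B = 2\<close> by simp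
  next
    case False
    obtain x where x: "x \<in> B" "s1 x = s2 x \<or> s0 x = s2 x"
      using leaf_exists[OF fin f0 f1 f2 ne card2 nocyc] by blast
    define b where "b = x"
    define c where "c = s2 b"
    have bB: "b \<in> B" using x b_def by simp
    have cB: "c \<in> B" "b \<noteq> c" "s2 c = b" using fpfD[OF f2 bB] c_def by auto
    define B' where "B' = B - {b, c}"
    have cardB': "card B' + 2 = card B" using card_B'_lemma[OF fin bB cB(1,2)] B'_def by simp
    have ne': "B' \<noteq> {}" using cardB' False by auto
    have UU: "U - {b, c} \<subseteq> B'" using U B'_def by auto
    have BU: "B - U \<subseteq> B" "\<forall>x\<in>B - U. s0 x \<in> B - U \<and> s2 x \<in> B - U"
    proof -
      show "B - U \<subseteq> B" by auto
      show "\<forall>x\<in>B - U. s0 x \<in> B - U \<and> s2 x \<in> B - U"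
      proof
        fix y assume y: "y \<in> B - U"
        have yB: "y \<in> B" "y \<notin> U" using y by auto
        have "s0 y \<notin> U"
        proof
          assume "s0 y \<in> U" then have "s0 (s0 y) \<in> U" using U(2) by simp
          then show False using fpfD(2)[OF f0 yB(1)] yB(2) by simp
        qed
        moreover have "s2 y \<notin> U"
        proof
          assume "s2 y \<in> U" then have "s2 (s2 y) \<in> U" using U(2) by simp
          then show False using fpfD(2)[OF f2 yB(1)] yB(2) by simp
        qed
        ultimately show "s0 y \<in> B - U \<and> s2 y \<in> B - U" using fpfD(1)[OF f0] fpfD(1)[OF f2] y by auto
      qed
    qed
    have BUeq: "(B - U) - {b, c} = B' - (U - {b, c})" using B'_def by auto
    show ?thesis
    proof (cases "s1 b = s2 b")
      case True
      define a where "a = s0 b"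
      define d where "d = s0 c"
      define p' where "p' = s0(a := d, d := a)"
      have ac: "a \<noteq> c"
      proof
        assume "a = c"
        then have "s0 b = c" "s0 c = b" using a_def fpfD(2)[OF f0 bB] by auto
        moreover have "s1 b = c" "s1 c = b" using True c_def fpfD(2)[OF f1 bB] by auto
        ultimately have "\<forall>z\<in>{b, c}. \<forall>g\<in>{s0, s1, s2}. g z \<in> {b, c}" using c_def cB by auto
        then have "card B \<le> 2" by (rule closed_small[OF conn bB fin])
        then show False using False by simp
      qed
      have L: "leafrm B s0 s1 s2 b c a d B' p'"
        by (unfold_locales) (use fin f0 f1 f2 bB c_def True a_def d_def ac B'_def p'_def in simp_all)
      note fn = leafrm.fpf_new[OF L]
      have sub: "B' \<subseteq> B" by (rule leafrm.B'_sub[OF L])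
      have fin': "finite B'" using fin sub by (rule finite_subset[rotated])
      have conn': "\<forall>x\<in>B'. \<forall>y\<in>B'. (x, y) \<in> (gen_rel {p', s1, s2})\<^sup>*"
        using conn_restrict[OF conn sub] leafrm.C_orb[OF L] by simp
      have clV: "\<forall>z\<in>B. \<forall>g\<in>{s1, s2}. g z \<in> B" and bkV: "\<forall>z\<in>B. \<forall>g\<in>{s1, s2}. (g z, z) \<in> (gen_rel {s1, s2})\<^sup>*"
        using inv_closed[of "{s1, s2}" B] inv_back[of "{s1, s2}" B] f1 f2 by auto
      have clE: "\<forall>z\<in>B. \<forall>g\<in>{s0, s2}. g z \<in> B" and bkE: "\<forall>z\<in>B. \<forall>g\<in>{s0, s2}. (g z, z) \<in> (gen_rel {s0, s2})\<^sup>*"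
        using inv_closed[of "{s0, s2}" B] inv_back[of "{s0, s2}" B] f0 f2 by auto
      have eqV: "\<forall>x\<in>B'. orbit_of {s1, s2} x = orbit_of {s1, s2} x \<inter> B'" using leafrm.V_orb[OF L] by simp
      have eqE: "\<forall>x\<in>B'. orbit_of {p', s2} x = orbit_of {s0, s2} x \<inter> B'" using leafrm.E_orb[OF L] by simp
      note RS = restrict_struct[OF fin sub clV bkV clE bkE eqV eqE card2 nocyc]
      have U'cl: "\<forall>y\<in>U - {b, c}. p' y \<in> U - {b, c} \<and> s2 y \<in> U - {b, c}"
      proof
        fix y assume y: "y \<in> U - {b, c}"
        have yB: "y \<in> B" using y U by auto
        have "p' y \<in> U"
        proof (cases "y = a \<or> y = d")
          case True
          have "a \<in> U \<longleftrightarrow> b \<in> U"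
          proof
            assume "a \<in> U" then have "s0 a \<in> U" using U(2) by simp
            then show "b \<in> U" using fpfD(2)[OF f0 bB] a_def by simp
          next
            assume "b \<in> U" then show "a \<in> U" using U(2) a_def by simp
          qed
          moreover have "d \<in> U \<longleftrightarrow> c \<in> U"
          proof
            assume "d \<in> U" then have "s0 d \<in> U" using U(2) by simp
            then show "c \<in> U" using fpfD(2)[OF f0 cB(1)] d_def by simp
          next
            assume "c \<in> U" then show "d \<in> U" using U(2) d_def by simp
          qed
          moreover have "c \<in> U \<longleftrightarrow> b \<in> U"
          proof
            assume "c \<in> U" then have "s2 c \<in> U" using U(2) by simp
            then show "b \<in> U" using cB(3) by simp
          next
            assume "b \<in> U" then show "c \<in> U" using U(2) c_def by simp
          qed
          ultimately have "a \<in> U \<longleftrightarrow> d \<in> U" by simp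
          then show ?thesis using True y leafrm.p'_simps[OF L] by auto
        next
          case False
          then show ?thesis using y U leafrm.p'_simps(3)[OF L] by auto
        qed
        moreover have "p' y \<noteq> b \<and> p' y \<noteq> c"
        proof -
          have "y \<in> B'" using y yB B'_def by simp
          then have "p' y \<in> B'" using fpfD(1)[OF fn(1)] by simp
          then show ?thesis using B'_def by simp
        qed
        moreover have "s2 y \<in> U" using y U by auto
        moreover have "s2 y \<noteq> b \<and> s2 y \<noteq> c" using leafrm.r2_notbc[OF L yB] y by auto
        ultimately show "p' y \<in> U - {b, c} \<and> s2 y \<in> U - {b, c}" by auto
      qed
      have IH: "even (num_cycles B' (TT p' s1 s2 (U - {b, c}))) \<and> even (num_cycles B' (PP p' s2 (U - {b, c})))
        \<and> even (num_cycles B' (TT p' s1 s2 (B' - (U - {b, c}))))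
        \<and> num_cycles B' (TT p' s1 s2 (U - {b, c})) + num_cycles B' (PP p' s2 (U - {b, c}))
          + num_cycles B' (TT p' s1 s2 (B' - (U - {b, c}))) = card B' + 4"
        by (rule less.hyps[OF _ fin' fn(1) fn(2) fn(3) ne' conn' RS(1) RS(2) UU U'cl])
           (use cardB' in simp)
      have e1: "num_cycles B (TT s0 s1 s2 U) = num_cycles B' (TT p' s1 s2 (U - {b, c})) + (if b \<in> U then 0 else 2)"
        using leafrm.LA_T[OF L U] .
      have e2: "num_cycles B (TT s0 s1 s2 (B - U)) = num_cycles B' (TT p' s1 s2 (B' - (U - {b, c}))) + (if b \<in> U then 2 else 0)"
        using leafrm.LA_T[OF L BU] BUeq bB by simp
      have e3: "num_cycles B (PP s0 s2 U) = num_cycles B' (PP p' s2 (U - {b, c}))"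
        using leafrm.LA_P[OF L U] .
      show ?thesis using IH e1 e2 e3 cardB' by auto
    next
      case nleaf: False
      then have la: "s0 b = s2 b" using x b_def by auto
      define a where "a = s1 b"
      define d where "d = s1 c"
      define p' where "p' = s1(a := d, d := a)"
      have ac: "a \<noteq> c" using nleaf a_def c_def by simp
      have L: "leafrm B s1 s0 s2 b c a d B' p'"
        by (unfold_locales) (use fin f0 f1 f2 bB c_def la a_def d_def ac B'_def p'_def in simp_all)
      note fn = leafrm.fpf_new[OF L]
      have sub: "B' \<subseteq> B" by (rule leafrm.B'_sub[OF L])
      have fin': "finite B'" using fin sub by (rule finite_subset[rotated])
      have ins1: "{s1, s0, s2} = {s0, s1, s2}" by auto
      have ins2: "{p', s0, s2} = {s0, p', s2}" by auto
      have conn': "\<forall>x\<in>B'. \<forall>y\<in>B'. (x, y) \<in> (gen_rel {s0, p', s2})\<^sup>*"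
        using conn_restrict[of B "{s1, s0, s2}" B' "{p', s0, s2}"] conn sub leafrm.C_orb[OF L]
        unfolding ins1 ins2 by simp
      have clV: "\<forall>z\<in>B. \<forall>g\<in>{s1, s2}. g z \<in> B" and bkV: "\<forall>z\<in>B. \<forall>g\<in>{s1, s2}. (g z, z) \<in> (gen_rel {s1, s2})\<^sup>*"
        using inv_closed[of "{s1, s2}" B] inv_back[of "{s1, s2}" B] f1 f2 by auto
      have clE: "\<forall>z\<in>B. \<forall>g\<in>{s0, s2}. g z \<in> B" and bkE: "\<forall>z\<in>B. \<forall>g\<in>{s0, s2}. (g z, z) \<in> (gen_rel {s0, s2})\<^sup>*"
        using inv_closed[of "{s0, s2}" B] inv_back[of "{s0, s2}" B] f0 f2 by auto
      have eqV: "\<forall>x\<in>B'. orbit_of {p', s2} x = orbit_of {s1, s2} x \<inter> B'" using leafrm.E_orb[OF L] by simp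
      have eqE: "\<forall>x\<in>B'. orbit_of {s0, s2} x = orbit_of {s0, s2} x \<inter> B'" using leafrm.V_orb[OF L] by simp
      note RS = restrict_struct[OF fin sub clV bkV clE bkE eqV eqE card2 nocyc]
      have U'cl: "\<forall>y\<in>U - {b, c}. s0 y \<in> U - {b, c} \<and> s2 y \<in> U - {b, c}"
      proof
        fix y assume y: "y \<in> U - {b, c}"
        have yB: "y \<in> B" using y U by auto
        have "s0 y \<noteq> b \<and> s0 y \<noteq> c" using leafrm.q_notbc[OF L yB] y by auto
        moreover have "s2 y \<noteq> b \<and> s2 y \<noteq> c" using leafrm.r2_notbc[OF L yB] y by auto
        ultimately show "s0 y \<in> U - {b, c} \<and> s2 y \<in> U - {b, c}" using y U by auto
      qed
      have IH: "even (num_cycles B' (TT s0 p' s2 (U - {b, c}))) \<and> even (num_cycles B' (PP s0 s2 (U - {b, c})))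
        \<and> even (num_cycles B' (TT s0 p' s2 (B' - (U - {b, c}))))
        \<and> num_cycles B' (TT s0 p' s2 (U - {b, c})) + num_cycles B' (PP s0 s2 (U - {b, c}))
          + num_cycles B' (TT s0 p' s2 (B' - (U - {b, c}))) = card B' + 4"
        by (rule less.hyps[OF _ fin' fn(2) fn(1) fn(3) ne' conn' RS(1) RS(2) UU U'cl])
           (use cardB' in simp)
      have e1: "num_cycles B (TT s0 s1 s2 U) = num_cycles B' (TT s0 p' s2 (U - {b, c}))"
        using leafrm.LB_T[OF L U] .
      have e2: "num_cycles B (TT s0 s1 s2 (B - U)) = num_cycles B' (TT s0 p' s2 (B' - (U - {b, c})))"
        using leafrm.LB_T[OF L BU] BUeq by simp
      have e3: "num_cycles B (PP s0 s2 U) = num_cycles B' (PP s0 s2 (U - {b, c})) + 2"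
        using leafrm.LB_P[OF L U] .
      show ?thesis using IH e1 e2 e3 cardB' by auto
    qed
  qed
qed

lemma rtr_mono: "G \<subseteq> G' \<Longrightarrow> (x, y) \<in> (gen_rel G)\<^sup>* \<Longrightarrow> (x, y) \<in> (gen_rel G')\<^sup>*"
proof -
  assume "G \<subseteq> G'"
  then have "gen_rel G \<subseteq> gen_rel G'" unfolding gen_rel_def by blast
  then show "(x, y) \<in> (gen_rel G)\<^sup>* \<Longrightarrow> (x, y) \<in> (gen_rel G')\<^sup>*" using rtrancl_mono by blast
qed

lemma same_orbit_conn:
  assumes cl: "\<forall>z\<in>B. \<forall>g\<in>G. g z \<in> B" and bk: "\<forall>z\<in>B. \<forall>g\<in>G. (g z, z) \<in> (gen_rel G)\<^sup>*"
    and x: "x \<in> B" and y: "y \<in> orbit_of G x" and z: "z \<in> orbit_of G x"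
  shows "(y, z) \<in> (gen_rel G)\<^sup>*"
proof -
  have "orbit_of G y = orbit_of G x" by (rule orbit_equiv[OF cl bk x y])
  then have "z \<in> orbit_of G y" using z by simp
  then show ?thesis by (simp add: orbit_of_def)
qed

lemma blade_conn:
  assumes f0: "fpf_involution B s0" and f1: "fpf_involution B s1" and f2: "fpf_involution B s2"
    and hc: "hg_connected (orbit_of {s1, s2} ` B) (orbit_of {s0, s2} ` B) hm_inc"
  shows "\<forall>x\<in>B. \<forall>y\<in>B. (x, y) \<in> (gen_rel {s0, s1, s2})\<^sup>*"
proof (intro ballI)
  let ?V = "orbit_of {s1, s2} ` B" and ?E = "orbit_of {s0, s2} ` B"
  let ?R = "{(x, y). x \<in> ?V \<and> y \<in> ?V \<and> (\<exists>e\<in>?E. hm_inc x e \<and> hm_inc y e)}"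
  have clV: "\<forall>z\<in>B. \<forall>g\<in>{s1, s2}. g z \<in> B" and bkV: "\<forall>z\<in>B. \<forall>g\<in>{s1, s2}. (g z, z) \<in> (gen_rel {s1, s2})\<^sup>*"
    using inv_closed[of "{s1, s2}" B] inv_back[of "{s1, s2}" B] f1 f2 by auto
  have clE: "\<forall>z\<in>B. \<forall>g\<in>{s0, s2}. g z \<in> B" and bkE: "\<forall>z\<in>B. \<forall>g\<in>{s0, s2}. (g z, z) \<in> (gen_rel {s0, s2})\<^sup>*"
    using inv_closed[of "{s0, s2}" B] inv_back[of "{s0, s2}" B] f0 f2 by auto
  have inV: "(p, q) \<in> (gen_rel {s0, s1, s2})\<^sup>*" if vV: "v \<in> ?V" and pv: "p \<in> v" and qv: "q \<in> v" for v p q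
  proof -
    obtain x where "x \<in> B" "v = orbit_of {s1, s2} x" using vV by auto
    then have "(p, q) \<in> (gen_rel {s1, s2})\<^sup>*" using same_orbit_conn[OF clV bkV] pv qv by simp
    then show ?thesis by (rule rtr_mono[rotated]) auto
  qed
  have inE: "(p, q) \<in> (gen_rel {s0, s1, s2})\<^sup>*" if eE: "e \<in> ?E" and pe: "p \<in> e" and qe: "q \<in> e" for e p q
  proof -
    obtain x where "x \<in> B" "e = orbit_of {s0, s2} x" using eE by auto
    then have "(p, q) \<in> (gen_rel {s0, s2})\<^sup>*" using same_orbit_conn[OF clE bkE] pe qe by simp
    then show ?thesis by (rule rtr_mono[rotated]) auto
  qed
  have main: "\<forall>p\<in>v. \<forall>q\<in>w. (p, q) \<in> (gen_rel {s0, s1, s2})\<^sup>*" if "(v, w) \<in> ?R\<^sup>*" "v \<in> ?V" for v w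
    using that
  proof (induction rule: rtrancl_induct)
    case base then show ?case using inV by blast
  next
    case (step w u)
    from step.hyps(2) obtain e where e: "e \<in> ?E" "w \<inter> e \<noteq> {}" "u \<inter> e \<noteq> {}" "u \<in> ?V"
      unfolding hm_inc_def by auto
    obtain m where m: "m \<in> w" "m \<in> e" using e(2) by auto
    obtain n where n: "n \<in> u" "n \<in> e" using e(3) by auto
    show ?case
    proof (intro ballI)
      fix p q assume p: "p \<in> v" and q: "q \<in> u"
      have "(p, m) \<in> (gen_rel {s0, s1, s2})\<^sup>*" using step.IH step.prems p m(1) by blast
      moreover have "(m, n) \<in> (gen_rel {s0, s1, s2})\<^sup>*" using inE[OF e(1) m(2) n(2)] .
      moreover have "(n, q) \<in> (gen_rel {s0, s1, s2})\<^sup>*" using inV[OF e(4) n(1) q] .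
      ultimately show "(p, q) \<in> (gen_rel {s0, s1, s2})\<^sup>*" by (meson rtrancl_trans)
    qed
  qed
  fix x y assume x: "x \<in> B" and y: "y \<in> B"
  have "(orbit_of {s1, s2} x, orbit_of {s1, s2} y) \<in> ?R\<^sup>*"
    using hc x y unfolding hg_connected_def by blast
  then show "(x, y) \<in> (gen_rel {s0, s1, s2})\<^sup>*"
    using main[of "orbit_of {s1, s2} x" "orbit_of {s1, s2} y"] x y orbit_self[of x] orbit_self[of y] by blast
qed

lemma one_orbit:
  assumes f0: "fpf_involution B s0" and f1: "fpf_involution B s1" and f2: "fpf_involution B s2"
    and U: "U \<subseteq> B" "\<forall>x\<in>U. s0 x \<in> U \<and> s2 x \<in> U"
    and conn: "\<forall>x\<in>B. \<forall>y\<in>B. (x, y) \<in> (gen_rel {s0, s1, s2})\<^sup>*" and ne: "B \<noteq> {}"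
  shows "num_orbits B {TT s0 s1 s2 U, PP s0 s2 U, s2} = 1"
proof -
  define T where "T = TT s0 s1 s2 U"
  define P where "P = PP s0 s2 U"
  let ?G = "{T, P, s2}"
  have clT: "\<forall>x\<in>B. T x \<in> B" using TT_perm[OF f0 f1 f2 U] T_def by simp
  have clP: "\<forall>x\<in>B. P x \<in> B" using PP_perm[OF f0 f2 U] P_def by simp
  have cl: "\<forall>z\<in>B. \<forall>g\<in>?G. g z \<in> B" using clT clP fpfD(1)[OF f2] by auto
  have cl3: "\<forall>z\<in>B. \<forall>g\<in>{s0, s1, s2}. g z \<in> B" using fpfD(1)[OF f0] fpfD(1)[OF f1] fpfD(1)[OF f2] by auto
  have st: "(z, g z) \<in> (gen_rel ?G)\<^sup>*" if z: "z \<in> B" and g: "g \<in> {s0, s1, s2}" for z g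
  proof -
    have s2s: "(z, s2 z) \<in> (gen_rel ?G)\<^sup>*" using step_rtr[of s2 ?G z] by simp
    have s0s: "(z, s0 z) \<in> (gen_rel ?G)\<^sup>*"
    proof (cases "z \<in> U")
      case True
      then have "s2 z \<in> U" using U by simp
      then have "P (s2 z) = s0 z" using fpfD(2)[OF f2 z] by (simp add: P_def PP_def)
      then show ?thesis using step_rtr2[of s2 ?G P "s0 z" z] by simp
    next
      case False
      then have "s2 (P z) = s0 z" using fpfD(2)[OF f2 fpfD(1)[OF f0 z]] by (simp add: P_def PP_def)
      then show ?thesis using step_rtr2[of P ?G s2 "s0 z" z] by simp
    qed
    have s1s: "(z, s1 z) \<in> (gen_rel ?G)\<^sup>*"
    proof (cases "s1 z \<in> U")
      case False
      then have "T (s2 z) = s1 z" using fpfD(2)[OF f2 z] by (simp add: T_def TT_def)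
      then show ?thesis using step_rtr2[of s2 ?G T "s1 z" z] by simp
    next
      case True
      define m where "m = s2 (s0 (s1 z))"
      have "T (s2 z) = m" using True fpfD(2)[OF f2 z] by (simp add: T_def TT_def m_def)
      moreover have "m \<in> U" using True U m_def by simp
      moreover have "s1 z \<in> B" using fpfD(1)[OF f1 z] .
      ultimately have "P (T (s2 z)) = s1 z"
        using fpfD(2)[OF f2 fpfD(1)[OF f0]] fpfD(2)[OF f0] by (simp add: P_def PP_def m_def)
      then show ?thesis using step_rtr3[of s2 ?G T P "s1 z" z] by simp
    qed
    show ?thesis using g s0s s1s s2s by auto
  qed
  have reach: "y \<in> B \<and> (x, y) \<in> (gen_rel ?G)\<^sup>*" if "(x, y) \<in> (gen_rel {s0, s1, s2})\<^sup>*" "x \<in> B" for x y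
    using that
  proof (induction rule: rtrancl_induct)
    case base then show ?case by simp
  next
    case (step y z)
    then obtain g where g: "g \<in> {s0, s1, s2}" "z = g y" by (auto simp: gen_rel_iff)
    then have "z \<in> B" using cl3 step by auto
    moreover have "(y, z) \<in> (gen_rel ?G)\<^sup>*" using st[OF _ g(1)] step g(2) by simp
    ultimately show ?case using step by (meson rtrancl_trans)
  qed
  have orb: "orbit_of ?G x = B" if x: "x \<in> B" for x
  proof
    show "orbit_of ?G x \<subseteq> B" by (rule orbit_sub[OF x cl])
    show "B \<subseteq> orbit_of ?G x"
    proof
      fix y assume "y \<in> B"
      then have "(x, y) \<in> (gen_rel {s0, s1, s2})\<^sup>*" using conn x by simp
      then show "y \<in> orbit_of ?G x" using reach x by (simp add: orbit_of_def)
    qed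
  qed
  have "orbit_of ?G ` B = {B}" using orb ne by auto
  then show ?thesis unfolding num_orbits_def T_def P_def by simp
qed

lemma pd_zero:
  assumes ht: "hypertree_map T"
    and nc: "\<not> hg_has_cycle (hm_vertices T) (hm_hyperedges T) hm_inc"
    and A: "A \<subseteq> hm_hyperedges T"
  shows "pd_euler_genus T A = 0"
proof -
  define B where "B = blades T"
  define s0 where "s0 = r0 T"
  define s1 where "s1 = r1 T"
  define s2 where "s2 = r2 T"
  have hm: "hypermap T" using ht unfolding hypertree_map_def by simp
  have fin: "finite B" and f0: "fpf_involution B s0" and f1: "fpf_involution B s1"
    and f2: "fpf_involution B s2"
    and card2: "\<forall>v\<in>orbit_of {s1, s2} ` B. \<forall>e\<in>orbit_of {s0, s2} ` B. card (v \<inter> e) \<le> 2"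
    using hm unfolding hypermap_def hm_vertices_def hm_hyperedges_def B_def s0_def s1_def s2_def by auto
  have Vd: "hm_vertices T = orbit_of {s1, s2} ` B" and Ed: "hm_hyperedges T = orbit_of {s0, s2} ` B"
    unfolding hm_vertices_def hm_hyperedges_def B_def s0_def s1_def s2_def by simp_all
  have nocyc: "\<not> hg_has_cycle (orbit_of {s1, s2} ` B) (orbit_of {s0, s2} ` B) hm_inc"
    using nc Vd Ed by simp
  have hc: "hg_connected (orbit_of {s1, s2} ` B) (orbit_of {s0, s2} ` B) hm_inc"
    using ht Vd Ed unfolding hypertree_map_def hg_hypertree_def by simp
  define U where "U = \<Union>A"
  have clE: "\<forall>z\<in>B. \<forall>g\<in>{s0, s2}. g z \<in> B"
    using inv_closed[of "{s0, s2}" B] f0 f2 by auto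
  have UB: "U \<subseteq> B"
  proof
    fix y assume "y \<in> U"
    then obtain e where "e \<in> A" "y \<in> e" using U_def by auto
    then obtain x where "x \<in> B" "y \<in> orbit_of {s0, s2} x" using A Ed by auto
    then show "y \<in> B" using orbit_sub[OF _ clE] by auto
  qed
  have Ucl: "\<forall>x\<in>U. s0 x \<in> U \<and> s2 x \<in> U"
  proof
    fix y assume "y \<in> U"
    then obtain e where e: "e \<in> A" "y \<in> e" using U_def by auto
    then obtain x where x: "e = orbit_of {s0, s2} x" using A Ed by auto
    have "(x, y) \<in> (gen_rel {s0, s2})\<^sup>*" using e x by (simp add: orbit_of_def)
    then have "(x, s0 y) \<in> (gen_rel {s0, s2})\<^sup>*" "(x, s2 y) \<in> (gen_rel {s0, s2})\<^sup>*"
      using step_rtr[of s0 "{s0, s2}" y] step_rtr[of s2 "{s0, s2}" y] by (meson insertCI rtrancl_trans)+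
    then have "s0 y \<in> e" "s2 y \<in> e" using x by (simp_all add: orbit_of_def)
    then show "s0 y \<in> U \<and> s2 y \<in> U" using e U_def by auto
  qed
  have tEq: "psi_restr T A \<circ> hm_tau T = TT s0 s1 s2 U"
    by (rule ext) (simp add: psi_restr_def hm_tau_def hm_psi_def TT_def U_def s0_def s1_def s2_def)
  have pEq: "psi_dual T A = PP s0 s2 U"
    by (rule ext) (simp add: psi_dual_def hm_psi_def PP_def U_def s0_def s2_def)
  have fEq: "\<forall>z\<in>B. (PP s0 s2 U \<circ> TT s0 s1 s2 U) z = TT s0 s1 s2 (B - U) z"
  proof
    fix z assume z: "z \<in> B"
    define y where "y = s1 (s2 z)"
    have yB: "y \<in> B" using fpfD(1)[OF f1 fpfD(1)[OF f2 z]] y_def by simp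
    show "(PP s0 s2 U \<circ> TT s0 s1 s2 U) z = TT s0 s1 s2 (B - U) z"
    proof (cases "y \<in> U")
      case True
      have "s2 (s0 y) \<in> U" using True Ucl by simp
      then show ?thesis using True yB fpfD(2)[OF f2 fpfD(1)[OF f0 yB]] fpfD(2)[OF f0 yB]
        by (simp add: TT_def PP_def y_def[symmetric])
    next
      case False
      then show ?thesis using yB by (simp add: TT_def PP_def y_def[symmetric])
    qed
  qed
  have clF: "\<forall>z\<in>B. TT s0 s1 s2 (B - U) z \<in> B"
  proof -
    have "B - U \<subseteq> B" by auto
    moreover have "\<forall>x\<in>B - U. s0 x \<in> B - U \<and> s2 x \<in> B - U"
    proof
      fix y assume y: "y \<in> B - U"
      have yB: "y \<in> B" "y \<notin> U" using y by auto
      have "s0 y \<notin> U"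
      proof
        assume "s0 y \<in> U" then have "s0 (s0 y) \<in> U" using Ucl by simp
        then show False using fpfD(2)[OF f0 yB(1)] yB(2) by simp
      qed
      moreover have "s2 y \<notin> U"
      proof
        assume "s2 y \<in> U" then have "s2 (s2 y) \<in> U" using Ucl by simp
        then show False using fpfD(2)[OF f2 yB(1)] yB(2) by simp
      qed
      ultimately show "s0 y \<in> B - U \<and> s2 y \<in> B - U" using fpfD(1)[OF f0 yB(1)] fpfD(1)[OF f2 yB(1)] by auto
    qed
    ultimately show ?thesis using TT_perm[OF f0 f1 f2] by blast
  qed
  have ncF: "num_cycles B (PP s0 s2 U \<circ> TT s0 s1 s2 U) = num_cycles B (TT s0 s1 s2 (B - U))"
    by (rule nc_cong[OF clF fEq])
  have pdE: "pd_euler_genus T A = 2 * int (num_orbits B {TT s0 s1 s2 U, PP s0 s2 U, s2})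
      - (int (num_cycles B (TT s0 s1 s2 U)) div 2 + int (num_cycles B (PP s0 s2 U)) div 2
         + int (num_cycles B (TT s0 s1 s2 (B - U))) div 2 - int (card B) div 2)"
    unfolding pd_euler_genus_def triple_eg_def triple_chi_def
    using tEq pEq ncF by (simp add: B_def s2_def)
  show ?thesis
  proof (cases "B = {}")
    case True
    then show ?thesis using pdE by (simp add: num_orbits_def num_cycles_def)
  next
    case False
    have conn: "\<forall>x\<in>B. \<forall>y\<in>B. (x, y) \<in> (gen_rel {s0, s1, s2})\<^sup>*"
      by (rule blade_conn[OF f0 f1 f2 hc])
    have M: "even (num_cycles B (TT s0 s1 s2 U)) \<and> even (num_cycles B (PP s0 s2 U))
      \<and> even (num_cycles B (TT s0 s1 s2 (B - U)))
      \<and> num_cycles B (TT s0 s1 s2 U) + num_cycles B (PP s0 s2 U) + num_cycles B (TT s0 s1 s2 (B - U))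
        = card B + 4"
      by (rule main_ind[OF fin f0 f1 f2 False conn card2 nocyc UB Ucl])
    have O: "num_orbits B {TT s0 s1 s2 U, PP s0 s2 U, s2} = 1"
      by (rule one_orbit[OF f0 f1 f2 UB Ucl conn False])
    obtain k1 k2 k3 where k: "num_cycles B (TT s0 s1 s2 U) = 2 * k1" "num_cycles B (PP s0 s2 U) = 2 * k2"
      "num_cycles B (TT s0 s1 s2 (B - U)) = 2 * k3" using M by (meson evenE)
    have cB: "card B + 4 = 2 * k1 + 2 * k2 + 2 * k3" using M k by simp
    then have "int (card B) + 4 = 2 * int k1 + 2 * int k2 + 2 * int k3"
      using arg_cong[OF cB, of int] by simp
    then have "int (card B) = 2 * (int k1 + int k2 + int k3) - 4" by (simp add: algebra_simps)
    then have "int (card B) div 2 = int k1 + int k2 + int k3 - 2" by simp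
    then show ?thesis using pdE O k by simp
  qed
qed

theorem mainTheorem10:
  fixes T :: "'b hypermap"
  assumes "hypertree_map T"
    and "\<not> hg_has_cycle (hm_vertices T) (hm_hyperedges T) hm_inc"
  shows "pd_eg_poly T = (\<lambda>z. 2 ^ card (hm_hyperedges T))"
proof
  fix z :: real
  have fin: "finite (hm_hyperedges T)"
    using assms(1) unfolding hypertree_map_def hypermap_def hm_hyperedges_def by simp
  have "pd_eg_poly T z = (\<Sum>A\<in>Pow (hm_hyperedges T). (1::real))"
    unfolding pd_eg_poly_def by (rule sum.cong) (use pd_zero[OF assms] in auto)
  also have "\<dots> = real (card (Pow (hm_hyperedges T)))" by simp
  also have "\<dots> = 2 ^ card (hm_hyperedges T)" using fin by (simp add: card_Pow)
  finally show "pd_eg_poly T z = 2 ^ card (hm_hyperedges T)" .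
qed

end
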